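(* Let $n\ge 3$, let $K_n$ be the complete graph on $n$ vertices, and let $J(m,r)$ be the Johnson graph with $r\ge 1$, $m\ge 2r$ and $m\ge 3$. Let the distinct adjacency eigenvalues of $J(m,r)$ be $\lambda_i=(r-i)(m-r-i)-i$ for $i=0,1,\ldots,r$, and its distinct distance eigenvalues be $\mu_0=s$, $\mu_1=-\frac{s}{m-1}$, $\mu_2=0$, where $s=\sum_{j=0}^{r} j k_j$ and $k_j=\binom{r}{j}\binom{m-r}{j}$ for $j=0,1,\ldots,r$. Then the distance eigenvalues of $K_n\otimes J(m,r)$ are $2n-2+ns+\lambda_0$, $2n-2-\frac{ns}{m-1}+\lambda_1$, $2n-2+\lambda_i$ for $i=2,3,\ldots,r$, and $\lambda_i-2$ for $i=0,1,\ldots,r$.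
   Context: The Johnson graph $J(m,r)$ has as vertices all $r$-element subsets of an $m$-element set, two vertices being adjacent if and only if they intersect in exactly $r-1$ elements. The Kronecker product $G\otimes H$ of simple graphs $G,H$ has vertex set $V(G)\times V(H)$, with $(x,y)$ adjacent to $(u,v)$ if and only if $xu\in E(G)$ and $yv\in E(H)$. Distance eigenvalues are the eigenvalues of the distance matrix, whose $(u,v)$ entry is the length of a shortest $u$–$v$ path. *)

theory Defs
  imports Complex_Main
begin

text \<open>A simple graph is given by a finite vertex set V and a symmetric, irreflexive
adjacency relation E (only its restriction to V matters).\<close>

definition walk_of_length :: "'a set \<Rightarrow> ('a \<Rightarrow> 'a \<Rightarrow> bool) \<Rightarrow> 'a \<Rightarrow> 'a \<Rightarrow> nat \<Rightarrow> bool" where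
  "walk_of_length V E x y k \<longleftrightarrow>
     (\<exists>p :: nat \<Rightarrow> 'a. p 0 = x \<and> p k = y \<and> (\<forall>i\<le>k. p i \<in> V) \<and>
        (\<forall>i<k. E (p i) (p (Suc i))))"

text \<open>Length of a shortest x--y path (graphs considered here are connected).\<close>
definition graph_dist :: "'a set \<Rightarrow> ('a \<Rightarrow> 'a \<Rightarrow> bool) \<Rightarrow> 'a \<Rightarrow> 'a \<Rightarrow> nat" where
  "graph_dist V E x y = (LEAST k. walk_of_length V E x y k)"

definition matrix_eigenvalues :: "'a set \<Rightarrow> ('a \<Rightarrow> 'a \<Rightarrow> real) \<Rightarrow> real set" where
  "matrix_eigenvalues V M =
     {\<mu>. \<exists>v :: 'a \<Rightarrow> real. (\<forall>x. x \<notin> V \<longrightarrow> v x = 0) \<and> (\<exists>x\<in>V. v x \<noteq> 0) \<and>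
          (\<forall>x\<in>V. (\<Sum>y\<in>V. M x y * v y) = \<mu> * v x)}"

definition distance_matrix :: "'a set \<Rightarrow> ('a \<Rightarrow> 'a \<Rightarrow> bool) \<Rightarrow> 'a \<Rightarrow> 'a \<Rightarrow> real" where
  "distance_matrix V E x y = real (graph_dist V E x y)"

definition distance_eigenvalues :: "'a set \<Rightarrow> ('a \<Rightarrow> 'a \<Rightarrow> bool) \<Rightarrow> real set" where
  "distance_eigenvalues V E = matrix_eigenvalues V (distance_matrix V E)"

definition complete_verts :: "nat \<Rightarrow> nat set" where
  "complete_verts n = {0..<n}"
definition complete_adj :: "nat \<Rightarrow> nat \<Rightarrow> bool" where
  "complete_adj i j \<longleftrightarrow> i \<noteq> j"

definition johnson_verts :: "nat \<Rightarrow> nat \<Rightarrow> nat set set" where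
  "johnson_verts m r = {A. A \<subseteq> {0..<m} \<and> card A = r}"
definition johnson_adj :: "nat \<Rightarrow> nat set \<Rightarrow> nat set \<Rightarrow> bool" where
  "johnson_adj r A B \<longleftrightarrow> card (A \<inter> B) = r - 1"

definition kron_verts :: "'a set \<Rightarrow> 'b set \<Rightarrow> ('a \<times> 'b) set" where
  "kron_verts V1 V2 = V1 \<times> V2"
definition kron_adj :: "('a \<Rightarrow> 'a \<Rightarrow> bool) \<Rightarrow> ('b \<Rightarrow> 'b \<Rightarrow> bool) \<Rightarrow> 'a \<times> 'b \<Rightarrow> 'a \<times> 'b \<Rightarrow> bool" where
  "kron_adj E1 E2 p q \<longleftrightarrow> E1 (fst p) (fst q) \<and> E2 (snd p) (snd q)"

definition johnson_lambda :: "nat \<Rightarrow> nat \<Rightarrow> nat \<Rightarrow> real" where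
  "johnson_lambda m r i = (real r - real i) * (real m - real r - real i) - real i"
definition johnson_k :: "nat \<Rightarrow> nat \<Rightarrow> nat \<Rightarrow> nat" where
  "johnson_k m r j = (r choose j) * ((m - r) choose j)"
definition johnson_s :: "nat \<Rightarrow> nat \<Rightarrow> real" where
  "johnson_s m r = (\<Sum>j=0..r. real j * real (johnson_k m r j))"

end

theory Submission
  imports Defs
begin

definition dn :: "nat \<Rightarrow> (nat set \<Rightarrow> real) \<Rightarrow> nat set \<Rightarrow> real" where
  "dn m f T = (\<Sum>x\<in>{0..<m} - T. f (insert x T))"
definition up :: "(nat set \<Rightarrow> real) \<Rightarrow> nat set \<Rightarrow> real" where
  "up f S = (\<Sum>x\<in>S. f (S - {x}))"
definition ssum :: "nat \<Rightarrow> nat \<Rightarrow> (nat set \<Rightarrow> real) \<Rightarrow> nat set \<Rightarrow> real" where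
  "ssum m j f T = (\<Sum>S\<in>{S. T \<subseteq> S \<and> S \<subseteq> {0..<m} \<and> card S = card T + j}. f S)"
definition nb :: "nat \<Rightarrow> (nat set \<Rightarrow> real) \<Rightarrow> nat set \<Rightarrow> real" where
  "nb m f A = (\<Sum>x\<in>A. \<Sum>y\<in>{0..<m} - A. f (insert y (A - {x})))"

lemma up_dn:
  assumes "A \<subseteq> {0..<m}"
  shows "up (dn m f) A = real (card A) * f A + nb m f A"
proof -
  have fin: "finite A" using assms finite_subset by blast
  have "up (dn m f) A = (\<Sum>x\<in>A. f A + (\<Sum>y\<in>{0..<m} - A. f (insert y (A - {x}))))"
    unfolding up_def
  proof (rule sum.cong[OF refl])
    fix x assume x: "x \<in> A"
    have e: "{0..<m} - (A - {x}) = insert x ({0..<m} - A)" using x assms by auto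
    have "dn m f (A - {x}) = f (insert x (A - {x})) + (\<Sum>y\<in>{0..<m} - A. f (insert y (A - {x})))"
    proof -
      have "x \<notin> {0..<m} - A" using x by auto
      then show ?thesis unfolding dn_def e using sum.insert[of "{0..<m} - A" x "\<lambda>y. f (insert y (A - {x}))"] by simp
    qed
    also have "insert x (A - {x}) = A" using x by auto
    finally show "dn m f (A - {x}) = f A + (\<Sum>y\<in>{0..<m} - A. f (insert y (A - {x})))" .
  qed
  also have "\<dots> = real (card A) * f A + nb m f A"
    unfolding nb_def by (simp add: sum.distrib)
  finally show ?thesis .
qed

lemma dn_up:
  assumes "A \<subseteq> {0..<m}"
  shows "dn m (up f) A = (real m - real (card A)) * f A + nb m f A"
proof -
  have fin: "finite A" using assms finite_subset by blast
  have "dn m (up f) A = (\<Sum>y\<in>{0..<m} - A. f A + (\<Sum>x\<in>A. f (insert y (A - {x}))))"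
    unfolding dn_def
  proof (rule sum.cong[OF refl])
    fix y assume y: "y \<in> {0..<m} - A"
    have "up f (insert y A) = f (insert y A - {y}) + (\<Sum>x\<in>A. f (insert y A - {x}))"
      unfolding up_def using y fin by (subst sum.insert) auto
    also have "insert y A - {y} = A" using y by auto
    also have "(\<Sum>x\<in>A. f (insert y A - {x})) = (\<Sum>x\<in>A. f (insert y (A - {x})))"
      apply (rule sum.cong[OF refl]) using y by (metis Diff_iff insert_Diff_if singletonD)
    finally show "up f (insert y A) = f A + (\<Sum>x\<in>A. f (insert y (A - {x})))" .
  qed
  also have "\<dots> = real (card ({0..<m} - A)) * f A + nb m f A"
    unfolding nb_def by (simp add: sum.distrib sum.swap[of _ A])
  also have "card ({0..<m} - A) = m - card A" using assms fin by (simp add: card_Diff_subset)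
  also have "real (m - card A) = real m - real (card A)"
    using card_mono[OF _ assms] by simp
  finally show ?thesis .
qed

lemma dn_local:
  assumes "T \<subseteq> {0..<m}" "\<And>S. S \<subseteq> {0..<m} \<Longrightarrow> card S = card T + 1 \<Longrightarrow> f S = g S"
  shows "dn m f T = dn m g T"
  unfolding dn_def
proof (rule sum.cong[OF refl])
  fix x assume "x \<in> {0..<m} - T"
  moreover have "finite T" using assms(1) finite_subset by blast
  ultimately show "f (insert x T) = g (insert x T)" using assms by (intro assms(2)) auto
qed

lemma up_local:
  assumes "S \<subseteq> {0..<m}" "\<And>T. T \<subseteq> {0..<m} \<Longrightarrow> card T + 1 = card S \<Longrightarrow> f T = g T"
  shows "up f S = up g S"
  unfolding up_def
proof (rule sum.cong[OF refl])
  fix x assume x: "x \<in> S"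
  have "finite S" using assms(1) finite_subset by blast
  then have "card (S - {x}) + 1 = card S" using x
    by (metis One_nat_def Suc_pred card_Diff_singleton card_gt_0_iff empty_iff add.commute plus_1_eq_Suc)
  then show "f (S - {x}) = g (S - {x})" using assms by (intro assms(2)) auto
qed

lemma ssum_local:
  assumes "\<And>S. S \<subseteq> {0..<m} \<Longrightarrow> card S = card T + j \<Longrightarrow> f S = g S"
  shows "ssum m j f T = ssum m j g T"
  unfolding ssum_def using assms by (intro sum.cong) auto

lemma ssum_cmult: "ssum m j (\<lambda>S. c * f S) T = c * ssum m j f T"
  unfolding ssum_def by (simp add: sum_distrib_left)

lemma ssum_0:
  assumes "T \<subseteq> {0..<m}"
  shows "ssum m 0 f T = f T"
proof -
  have fin: "finite T" using assms finite_subset by blast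
  have "{S. T \<subseteq> S \<and> S \<subseteq> {0..<m} \<and> card S = card T + 0} = {T}"
  proof (intro equalityI subsetI)
    fix S assume "S \<in> {S. T \<subseteq> S \<and> S \<subseteq> {0..<m} \<and> card S = card T + 0}"
    then have "T \<subseteq> S" "S \<subseteq> {0..<m}" "card S = card T" by auto
    then have "T = S" using card_subset_eq[of S T] finite_subset[of S "{0..<m}"] by auto
    then show "S \<in> {T}" by simp
  qed (use assms in auto)
  then show ?thesis unfolding ssum_def by simp
qed


lemma fin_sub: "S \<subseteq> {0..<(m::nat)} \<Longrightarrow> finite S" by (meson finite_atLeastLessThan finite_subset)

lemma ssum_dn:
  assumes T: "T \<subseteq> {0..<m}"
  shows "ssum m j (dn m f) T = real (Suc j) * ssum m (Suc j) f T"
proof -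
  define F where "F = (\<lambda>j. {S. T \<subseteq> S \<and> S \<subseteq> {0..<m} \<and> card S = card T + j})"
  have finF: "finite (F k)" for k
    unfolding F_def by (rule finite_subset[of _ "Pow {0..<m}"]) auto
  have finT: "finite T" using T fin_sub by blast
  have "ssum m j (dn m f) T = (\<Sum>S\<in>F j. \<Sum>x\<in>{0..<m} - S. f (insert x S))"
    unfolding ssum_def dn_def F_def by simp
  also have "\<dots> = (\<Sum>(S,x)\<in>Sigma (F j) (\<lambda>S. {0..<m} - S). f (insert x S))"
    by (rule sum.Sigma) (use finF in auto)
  also have "\<dots> = (\<Sum>(S,x)\<in>Sigma (F (Suc j)) (\<lambda>S. S - T). f S)"
  proof (rule sum.reindex_bij_witness[where j = "\<lambda>(S, x). (insert x S, x)" and i = "\<lambda>(S, x). (S - {x}, x)"])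
    fix a assume a: "a \<in> Sigma (F j) (\<lambda>S. {0..<m} - S)"
    then obtain S x where ax: "a = (S, x)" "S \<in> F j" "x \<in> {0..<m} - S" by auto
    then have fS: "finite S" unfolding F_def using fin_sub by blast
    show "(case case a of (S, x) \<Rightarrow> (insert x S, x) of (S, x) \<Rightarrow> (S - {x}, x)) = a"
      using ax by simp
    have "card (insert x S) = card T + Suc j" using ax fS unfolding F_def by simp
    moreover have "T \<subseteq> insert x S" "insert x S \<subseteq> {0..<m}" "x \<notin> T" using ax unfolding F_def by auto
    ultimately show "(case a of (S, x) \<Rightarrow> (insert x S, x)) \<in> Sigma (F (Suc j)) (\<lambda>S. S - T)"
      using ax unfolding F_def by simp
    show "(case (case a of (S, x) \<Rightarrow> (insert x S, x)) of (S, x) \<Rightarrow> f S) = (case a of (S, x) \<Rightarrow> f (insert x S))"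
      using ax by simp
  next
    fix b assume b: "b \<in> Sigma (F (Suc j)) (\<lambda>S. S - T)"
    then obtain S x where bx: "b = (S, x)" "S \<in> F (Suc j)" "x \<in> S - T" by auto
    then have fS: "finite S" unfolding F_def using fin_sub by blast
    show "(case case b of (S, x) \<Rightarrow> (S - {x}, x) of (S, x) \<Rightarrow> (insert x S, x)) = b"
      using bx by (simp add: insert_absorb)
    have cS: "card S = card T + Suc j" using bx(2) unfolding F_def by simp
    have "x \<in> S" using bx(3) by simp
    then have "card (S - {x}) = card S - 1" by (rule card_Diff_singleton)
    with cS have "card (S - {x}) = card T + j" by simp
    moreover have "T \<subseteq> S - {x}" "S - {x} \<subseteq> {0..<m}" "x \<in> {0..<m}" "x \<notin> S - {x}"
      using bx unfolding F_def by auto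
    ultimately show "(case b of (S, x) \<Rightarrow> (S - {x}, x)) \<in> Sigma (F j) (\<lambda>S. {0..<m} - S)"
      using bx unfolding F_def by simp
  qed
  also have "\<dots> = (\<Sum>S\<in>F (Suc j). \<Sum>x\<in>S - T. f S)"
  proof (rule sum.Sigma[symmetric])
    show "finite (F (Suc j))" by (rule finF)
    show "\<forall>S\<in>F (Suc j). finite (S - T)" unfolding F_def using fin_sub by blast
  qed
  also have "\<dots> = (\<Sum>S\<in>F (Suc j). real (Suc j) * f S)"
  proof (rule sum.cong[OF refl])
    fix S assume "S \<in> F (Suc j)"
    then have S: "T \<subseteq> S" "S \<subseteq> {0..<m}" "card S = card T + Suc j" unfolding F_def by simp_all
    have "card (S - T) = card S - card T" using card_Diff_subset[OF finT S(1)] .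
    with S(3) have "card (S - T) = Suc j" by simp
    then show "(\<Sum>x\<in>S - T. f S) = real (Suc j) * f S" by simp
  qed
  also have "\<dots> = real (Suc j) * ssum m (Suc j) f T"
    unfolding ssum_def F_def by (simp add: sum_distrib_left)
  finally show ?thesis .
qed


definition th :: "nat \<Rightarrow> nat \<Rightarrow> nat \<Rightarrow> real" where
  "th m k i = (real k - real i) * (real m - real k - real i + 1)"

lemma card_minus1:
  assumes "finite S" "x \<in> S" shows "card (S - {x}) + 1 = card S"
proof -
  have "card (S - {x}) = card S - 1" using assms(2) by (rule card_Diff_singleton)
  moreover have "card S > 0" using assms card_gt_0_iff by blast
  ultimately show ?thesis by simp
qed

lemma spec_fwd:
  "\<forall>f \<theta> j. (\<exists>A. A \<subseteq> {0..<m} \<and> card A = k \<and> f A \<noteq> 0) \<longrightarrow>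
     (\<forall>A. A \<subseteq> {0..<m} \<and> card A = k \<longrightarrow> up (dn m f) A = \<theta> * f A) \<longrightarrow>
     (\<forall>T. T \<subseteq> {0..<m} \<and> card T + j = k \<longrightarrow> ssum m j f T = 0) \<longrightarrow>
     (\<exists>i\<le>k. k < i + j \<and> \<theta> = th m k i)"
proof (induction k)
  case 0
  show ?case
  proof (intro allI impI)
    fix f \<theta> j
    assume nz: "\<exists>A. A \<subseteq> {0..<m} \<and> card A = 0 \<and> f A \<noteq> 0"
      and ev: "\<forall>A. A \<subseteq> {0..<m} \<and> card A = 0 \<longrightarrow> up (dn m f) A = \<theta> * f A"
      and ss: "\<forall>T. T \<subseteq> {0..<m} \<and> card T + j = 0 \<longrightarrow> ssum m j f T = 0"
    from nz obtain A where A: "A \<subseteq> {0..<m}" "card A = 0" "f A \<noteq> 0" by blast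
    have "finite A" using A(1) fin_sub by blast
    with A(2) have Ae: "A = {}" by simp
    have "up (dn m f) {} = 0" unfolding up_def by simp
    with ev Ae A have "\<theta> * f A = 0" by force
    with A have t0: "\<theta> = 0" by simp
    have "j \<noteq> 0"
    proof
      assume "j = 0"
      then have "ssum m 0 f {} = 0" using ss by simp
      moreover have "ssum m 0 f {} = f {}" by (rule ssum_0) simp
      ultimately show False using A Ae by simp
    qed
    then show "\<exists>i\<le>0. 0 < i + j \<and> \<theta> = th m 0 i" using t0 unfolding th_def by simp
  qed
next
  case (Suc k)
  show ?case
  proof (intro allI impI)
    fix f \<theta> j
    assume nz: "\<exists>A. A \<subseteq> {0..<m} \<and> card A = Suc k \<and> f A \<noteq> 0"
      and ev: "\<forall>A. A \<subseteq> {0..<m} \<and> card A = Suc k \<longrightarrow> up (dn m f) A = \<theta> * f A"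
      and ss: "\<forall>T. T \<subseteq> {0..<m} \<and> card T + j = Suc k \<longrightarrow> ssum m j f T = 0"
    from nz obtain A where A: "A \<subseteq> {0..<m}" "card A = Suc k" "f A \<noteq> 0" by blast
    have j0: "j \<noteq> 0"
    proof
      assume "j = 0"
      then have "ssum m 0 f A = 0" using ss A by simp
      moreover have "ssum m 0 f A = f A" using A(1) by (rule ssum_0)
      ultimately show False using A by simp
    qed
    show "\<exists>i\<le>Suc k. Suc k < i + j \<and> \<theta> = th m (Suc k) i"
    proof (cases "\<theta> = 0")
      case True
      then show ?thesis using j0 by (intro exI[of _ "Suc k"]) (simp add: th_def)
    next
      case False
      define g where "g = dn m f"
      have gnz: "\<exists>B. B \<subseteq> {0..<m} \<and> card B = k \<and> g B \<noteq> 0"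
      proof (rule ccontr)
        assume "\<not> ?thesis"
        then have z: "\<And>B. B \<subseteq> {0..<m} \<Longrightarrow> card B = k \<Longrightarrow> g B = 0" by blast
        have "up g A = up (\<lambda>_. 0) A"
          by (rule up_local[OF A(1)]) (use z A in simp)
        then have "up g A = 0" unfolding up_def by simp
        then have "\<theta> * f A = 0" using ev A unfolding g_def by simp
        then show False using False A by simp
      qed
      have gev: "\<forall>B. B \<subseteq> {0..<m} \<and> card B = k \<longrightarrow> up (dn m g) B = (\<theta> - (real m - 2 * real k)) * g B"
      proof (intro allI impI)
        fix B assume B: "B \<subseteq> {0..<m} \<and> card B = k"
        have "dn m (up g) B = dn m (\<lambda>S. \<theta> * f S) B"
          unfolding g_def by (rule dn_local) (use B ev in auto)
        also have "\<dots> = \<theta> * g B" unfolding dn_def g_def by (simp add: sum_distrib_left)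
        finally have e1: "dn m (up g) B = \<theta> * g B" .
        have "up (dn m g) B = real (card B) * g B + nb m g B" using B up_dn by blast
        also have "nb m g B = dn m (up g) B - (real m - real (card B)) * g B"
          using dn_up[of B m g] B by simp
        finally show "up (dn m g) B = (\<theta> - (real m - 2 * real k)) * g B"
          using e1 B by (simp add: algebra_simps)
      qed
      have gss: "\<forall>T. T \<subseteq> {0..<m} \<and> card T + (j - 1) = k \<longrightarrow> ssum m (j - 1) g T = 0"
      proof (intro allI impI)
        fix T assume T: "T \<subseteq> {0..<m} \<and> card T + (j - 1) = k"
        have "ssum m (j - 1) g T = real (Suc (j - 1)) * ssum m (Suc (j - 1)) f T"
          unfolding g_def using T ssum_dn by blast
        also have "Suc (j - 1) = j" using j0 by simp
        also have "ssum m j f T = 0"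
        proof -
          have "card T + j = Suc k" using T j0 by arith
          then show ?thesis using ss T by blast
        qed
        finally show "ssum m (j - 1) g T = 0" by simp
      qed
      from Suc.IH[rule_format, OF gnz gev[rule_format] gss[rule_format]] obtain i where
        i: "i \<le> k" "k < i + (j - 1)" "\<theta> - (real m - 2 * real k) = th m k i" by blast
      show ?thesis
      proof (intro exI[of _ i] conjI)
        show "i \<le> Suc k" using i by simp
        show "Suc k < i + j" using i j0 by simp
        show "\<theta> = th m (Suc k) i" using i(3) unfolding th_def by (simp add: algebra_simps)
      qed
    qed
  qed
qed

definition wv :: "nat \<Rightarrow> nat set \<Rightarrow> real" where
  "wv j S = (if 2*j \<in> S then 1 else 0) - (if Suc (2*j) \<in> S then 1 else 0)"
definition kv :: "nat \<Rightarrow> nat set \<Rightarrow> real" where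
  "kv i S = (\<Prod>j<i. wv j S)"

lemma prod_small:
  assumes "finite T" "card T < i"
  shows "(\<Prod>j<i. wv j T) = 0"
proof (rule ccontr)
  assume "(\<Prod>j<i. wv j T) \<noteq> 0"
  then have nz: "\<And>j. j < i \<Longrightarrow> wv j T \<noteq> 0" by auto
  define \<phi> where "\<phi> j = (if 2*j \<in> T then 2*j else Suc (2*j))" for j
  have "inj_on \<phi> {..<i}"
  proof (rule inj_onI)
    fix a b assume "\<phi> a = \<phi> b"
    then have "\<phi> a div 2 = \<phi> b div 2" by simp
    moreover have "\<phi> x div 2 = x" for x unfolding \<phi>_def by simp
    ultimately show "a = b" by simp
  qed
  moreover have "\<phi> ` {..<i} \<subseteq> T"
  proof
    fix y assume "y \<in> \<phi> ` {..<i}"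
    then obtain j where j: "j < i" "y = \<phi> j" by auto
    from nz[OF j(1)] have "2*j \<in> T \<or> Suc (2*j) \<in> T" unfolding wv_def by (auto split: if_splits)
    then show "y \<in> T" using j unfolding \<phi>_def by auto
  qed
  ultimately have "card {..<i} \<le> card T" using card_inj_on_le assms(1) by blast
  then show False using assms(2) by simp
qed

lemma pair_sum: "(\<Sum>x<2*i. h x) = (\<Sum>j<i. h (2*j) + h (Suc (2*j)))"
proof (induction i)
  case 0 then show ?case by simp
next
  case (Suc i)
  have "{..<2 * Suc i} = insert (Suc (2*i)) (insert (2*i) {..<2*i})" by auto
  then have "(\<Sum>x<2*Suc i. h x) = h (Suc (2*i)) + (h (2*i) + (\<Sum>x<2*i. h x))" by simp
  then show ?case using Suc.IH by (simp add: algebra_simps)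
qed

lemma wv_insert_other: "x \<noteq> 2*j \<Longrightarrow> x \<noteq> Suc (2*j) \<Longrightarrow> wv j (insert x T) = wv j T"
  unfolding wv_def by auto

lemma kv_ker:
  assumes m: "2*i \<le> m" and T: "T \<subseteq> {0..<m}" "card T + 1 = i"
  shows "dn m (kv i) T = 0"
proof -
  have finT: "finite T" using T(1) fin_sub by blast
  define h where "h x = (if x \<in> T then 0 else kv i (insert x T))" for x
  have "dn m (kv i) T = (\<Sum>x\<in>{0..<m}. h x)"
    unfolding dn_def by (rule sum.mono_neutral_cong_left) (auto simp: h_def)
  also have "\<dots> = (\<Sum>x\<in>{0..<2*i}. h x) + (\<Sum>x\<in>{2*i..<m}. h x)"
    using sum.atLeastLessThan_concat[of 0 "2*i" m h] m by simp
  also have "(\<Sum>x\<in>{2*i..<m}. h x) = 0"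
  proof (rule sum.neutral, rule ballI)
    fix x assume x: "x \<in> {2*i..<m}"
    have "kv i (insert x T) = (\<Prod>j<i. wv j T)"
      unfolding kv_def by (rule prod.cong[OF refl]) (use x in \<open>auto intro!: wv_insert_other\<close>)
    also have "\<dots> = 0" using prod_small[OF finT] T by simp
    finally show "h x = 0" unfolding h_def by simp
  qed
  also have "(\<Sum>x\<in>{0..<2*i}. h x) = (\<Sum>j<i. h (2*j) + h (Suc (2*j)))"
    using pair_sum[of h i] by (simp add: lessThan_atLeast0)
  also have "\<dots> = 0"
  proof (rule sum.neutral, rule ballI)
    fix j assume j: "j \<in> {..<i}"
    define P where "P = (\<Prod>l\<in>{..<i} - {j}. wv l T)"
    have split: "kv i (insert x T) = wv j (insert x T) * P" if "x = 2*j \<or> x = Suc (2*j)" for x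
    proof -
      have "kv i (insert x T) = wv j (insert x T) * (\<Prod>l\<in>{..<i} - {j}. wv l (insert x T))"
        unfolding kv_def using j by (simp add: prod.remove)
      also have "(\<Prod>l\<in>{..<i} - {j}. wv l (insert x T)) = P"
        unfolding P_def by (rule prod.cong[OF refl]) (use that in \<open>auto intro!: wv_insert_other\<close>)
      finally show ?thesis .
    qed
    have "h (2*j) + h (Suc (2*j)) =
      (if 2*j \<in> T then 0 else wv j (insert (2*j) T) * P) + (if Suc (2*j) \<in> T then 0 else wv j (insert (Suc (2*j)) T) * P)"
      unfolding h_def using split by simp
    also have "\<dots> = 0" unfolding wv_def by auto
    finally show "h (2*j) + h (Suc (2*j)) = 0" .
  qed
  finally show ?thesis by simp
qed

lemma kv_nz:
  assumes "2*i \<le> m"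
  shows "\<exists>A. A \<subseteq> {0..<m} \<and> card A = i \<and> kv i A \<noteq> 0"
proof (intro exI conjI)
  let ?A = "(\<lambda>j. 2*j) ` {..<i}"
  show "?A \<subseteq> {0..<m}" using assms by auto
  have "inj_on (\<lambda>j. 2*j) {..<i}" by (rule inj_onI) simp
  then show "card ?A = i" by (simp add: card_image)
  have "wv j ?A = 1" if "j < i" for j
  proof -
    have "2*j \<in> ?A" using that by auto
    moreover have "Suc (2*j) \<notin> ?A" by auto presburger
    ultimately show ?thesis unfolding wv_def by simp
  qed
  then have "kv i ?A = 1" unfolding kv_def by simp
  then show "kv i ?A \<noteq> 0" by simp
qed

lemma up_zero: "up (\<lambda>_. 0) S = 0" unfolding up_def by simp
lemma ssum_zero: "ssum m j (\<lambda>_. 0) T = 0" unfolding ssum_def by simp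

lemma sum_nz_obtain:
  assumes "sum g A \<noteq> (0::real)" obtains x where "x \<in> A" "g x \<noteq> 0"
  using assms sum.neutral by (metis)

lemma spec_ex:
  assumes m: "2*i \<le> m" and ik: "i \<le> k"
  shows "2*k \<le> m \<longrightarrow> (\<exists>f. (\<exists>A. A \<subseteq> {0..<m} \<and> card A = k \<and> f A \<noteq> 0) \<and>
      (\<forall>A. A \<subseteq> {0..<m} \<and> card A = k \<longrightarrow> up (dn m f) A = th m k i * f A) \<and>
      (\<forall>j T. k - i + 1 \<le> j \<and> T \<subseteq> {0..<m} \<and> card T + j = k \<longrightarrow> ssum m j f T = 0))"
  using ik
proof (induction k rule: dec_induct)
  case base
  show ?case
  proof (intro impI exI[of _ "kv i"] conjI allI)
    show "\<exists>A. A \<subseteq> {0..<m} \<and> card A = i \<and> kv i A \<noteq> 0" using kv_nz[OF m] .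
  next
    fix A assume A: "A \<subseteq> {0..<m} \<and> card A = i"
    have "up (dn m (kv i)) A = up (\<lambda>_. 0) A"
      by (rule up_local) (use A kv_ker[OF m] in auto)
    then show "up (dn m (kv i)) A = th m i i * kv i A" by (simp add: up_zero th_def)
  next
    fix j T assume jT: "i - i + 1 \<le> j \<and> T \<subseteq> {0..<m} \<and> card T + j = i"
    have "ssum m (j - 1) (dn m (kv i)) T = real (Suc (j - 1)) * ssum m (Suc (j - 1)) (kv i) T"
      using jT ssum_dn by blast
    moreover have "ssum m (j - 1) (dn m (kv i)) T = ssum m (j - 1) (\<lambda>_. 0) T"
      by (rule ssum_local) (use jT kv_ker[OF m] in auto)
    moreover have "Suc (j - 1) = j" using jT by simp
    ultimately show "ssum m j (kv i) T = 0" using jT by (simp add: ssum_zero)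
  qed
next
  case (step n)
  show ?case
  proof
    assume mn: "2 * Suc n \<le> m"
    then obtain f where f_nz: "\<exists>A. A \<subseteq> {0..<m} \<and> card A = n \<and> f A \<noteq> 0"
      and f_ev: "\<forall>A. A \<subseteq> {0..<m} \<and> card A = n \<longrightarrow> up (dn m f) A = th m n i * f A"
      and f_ss: "\<forall>j T. n - i + 1 \<le> j \<and> T \<subseteq> {0..<m} \<and> card T + j = n \<longrightarrow> ssum m j f T = 0"
      using step.IH by auto
    define \<theta> where "\<theta> = th m (Suc n) i"
    have \<theta>pos: "\<theta> > 0" unfolding \<theta>_def th_def using step.hyps mn by simp
    have dnup: "dn m (up f) A = \<theta> * f A" if A: "A \<subseteq> {0..<m}" "card A = n" for A
    proof -
      have "dn m (up f) A = (real m - real n) * f A + nb m f A" using dn_up[OF A(1)] A(2) by simp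
      moreover have "up (dn m f) A = real n * f A + nb m f A" using up_dn[OF A(1)] A(2) by simp
      ultimately show ?thesis using f_ev A unfolding \<theta>_def th_def by (simp add: algebra_simps)
    qed
    define g where "g = up f"
    show "\<exists>g. (\<exists>A. A \<subseteq> {0..<m} \<and> card A = Suc n \<and> g A \<noteq> 0) \<and>
      (\<forall>A. A \<subseteq> {0..<m} \<and> card A = Suc n \<longrightarrow> up (dn m g) A = th m (Suc n) i * g A) \<and>
      (\<forall>j T. Suc n - i + 1 \<le> j \<and> T \<subseteq> {0..<m} \<and> card T + j = Suc n \<longrightarrow> ssum m j g T = 0)"
    proof (intro exI[of _ g] conjI allI impI)
      obtain A where A: "A \<subseteq> {0..<m}" "card A = n" "f A \<noteq> 0" using f_nz by blast
      have "dn m g A \<noteq> 0" unfolding g_def using dnup[OF A(1,2)] A(3) \<theta>pos by simp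
      then obtain x where x: "x \<in> {0..<m} - A" "g (insert x A) \<noteq> 0"
        unfolding dn_def by (rule sum_nz_obtain)
      have finA: "finite A" using A(1) fin_sub by blast
      show "\<exists>A. A \<subseteq> {0..<m} \<and> card A = Suc n \<and> g A \<noteq> 0"
      proof (intro exI conjI)
        show "insert x A \<subseteq> {0..<m}" using x A by auto
        show "card (insert x A) = Suc n" using x A finA by simp
        show "g (insert x A) \<noteq> 0" using x by simp
      qed
    next
      fix A assume A: "A \<subseteq> {0..<m} \<and> card A = Suc n"
      have "up (dn m g) A = up (\<lambda>S. \<theta> * f S) A"
        unfolding g_def by (rule up_local) (use A dnup in auto)
      also have "\<dots> = \<theta> * g A" unfolding up_def g_def by (simp add: sum_distrib_left)
      finally show "up (dn m g) A = th m (Suc n) i * g A" unfolding \<theta>_def .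
    next
      fix j T assume jT: "Suc n - i + 1 \<le> j \<and> T \<subseteq> {0..<m} \<and> card T + j = Suc n"
      have j1: "Suc (j - 1) = j" using jT by simp
      have "ssum m (j - 1) (dn m g) T = real (Suc (j - 1)) * ssum m (Suc (j - 1)) g T"
        using jT ssum_dn by blast
      moreover have "ssum m (j - 1) (dn m g) T = ssum m (j - 1) (\<lambda>S. \<theta> * f S) T"
        unfolding g_def by (rule ssum_local) (use jT dnup in auto)
      moreover have "ssum m (j - 1) f T = 0"
      proof -
        have "n - i + 1 \<le> j - 1" "card T + (j - 1) = n" using jT step.hyps by auto
        then show ?thesis using f_ss jT by blast
      qed
      ultimately show "ssum m j g T = 0" using j1 by (simp add: ssum_cmult)
    qed
  qed
qed


abbreviation "JV m r \<equiv> johnson_verts m r"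

lemma ind_sum: "finite A \<Longrightarrow> (\<Sum>x\<in>A. if P x then (1::real) else 0) = real (card {x\<in>A. P x})"
  by (simp add: sum.If_cases Int_def conj_commute)

lemma JV_fin: "finite (JV m r)"
  unfolding johnson_verts_def by (rule finite_subset[of _ "Pow {0..<m}"]) auto

lemma JV_card: "card (JV m r) = m choose r"
  unfolding johnson_verts_def using n_subsets[of "{0..<m}" r] by simp

lemma count_contain:
  assumes X: "finite X" and x: "x \<in> X" and r: "r \<ge> 1"
  shows "card {A. A \<subseteq> X \<and> card A = r \<and> x \<in> A} = (card X - 1) choose (r - 1)"
proof -
  have "bij_betw (\<lambda>A. A - {x}) {A. A \<subseteq> X \<and> card A = r \<and> x \<in> A} {A. A \<subseteq> X - {x} \<and> card A = r - 1}"
  proof (rule bij_betw_byWitness[where f' = "insert x"])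
    show "\<forall>a\<in>{A. A \<subseteq> X \<and> card A = r \<and> x \<in> A}. insert x (a - {x}) = a" by auto
    show "\<forall>a'\<in>{A. A \<subseteq> X - {x} \<and> card A = r - 1}. insert x a' - {x} = a'" by auto
    show "(\<lambda>A. A - {x}) ` {A. A \<subseteq> X \<and> card A = r \<and> x \<in> A} \<subseteq> {A. A \<subseteq> X - {x} \<and> card A = r - 1}"
    proof
      fix B assume "B \<in> (\<lambda>A. A - {x}) ` {A. A \<subseteq> X \<and> card A = r \<and> x \<in> A}"
      then obtain A where A: "A \<subseteq> X" "card A = r" "x \<in> A" "B = A - {x}" by auto
      have "card (A - {x}) = card A - 1" using A(3) by (rule card_Diff_singleton)
      then show "B \<in> {A. A \<subseteq> X - {x} \<and> card A = r - 1}" using A by auto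
    qed
    show "insert x ` {A. A \<subseteq> X - {x} \<and> card A = r - 1} \<subseteq> {A. A \<subseteq> X \<and> card A = r \<and> x \<in> A}"
    proof
      fix B assume "B \<in> insert x ` {A. A \<subseteq> X - {x} \<and> card A = r - 1}"
      then obtain A where A: "A \<subseteq> X - {x}" "card A = r - 1" "B = insert x A" by auto
      have "finite A" using A(1) X finite_subset by blast
      moreover have "x \<notin> A" using A(1) by auto
      ultimately have "card B = Suc (r - 1)" using A by simp
      then show "B \<in> {A. A \<subseteq> X \<and> card A = r \<and> x \<in> A}" using A r x by auto
    qed
  qed
  then have "card {A. A \<subseteq> X \<and> card A = r \<and> x \<in> A} = card {A. A \<subseteq> X - {x} \<and> card A = r - 1}"
    by (rule bij_betw_same_card)
  also have "\<dots> = card (X - {x}) choose (r - 1)" using X by (simp add: n_subsets)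
  also have "card (X - {x}) = card X - 1" using x by (rule card_Diff_singleton)
  finally show ?thesis .
qed

lemma C1:
  assumes "x < m" "r \<ge> 1"
  shows "card {A \<in> JV m r. x \<in> A} = (m - 1) choose (r - 1)"
proof -
  have "{A \<in> JV m r. x \<in> A} = {A. A \<subseteq> {0..<m} \<and> card A = r \<and> x \<in> A}"
    unfolding johnson_verts_def by auto
  then show ?thesis using count_contain[of "{0..<m}" x r] assms by simp
qed

lemma C2:
  assumes "x < m" "y < m" "x \<noteq> y" "r \<ge> 1"
  shows "card {A \<in> JV m r. x \<in> A \<and> y \<notin> A} = (m - 2) choose (r - 1)"
proof -
  have "{A \<in> JV m r. x \<in> A \<and> y \<notin> A} = {A. A \<subseteq> {0..<m} - {y} \<and> card A = r \<and> x \<in> A}"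
    unfolding johnson_verts_def by auto
  moreover have "card ({0..<m} - {y}) = m - 1" using assms by simp
  ultimately show ?thesis using count_contain[of "{0..<m} - {y}" x r] assms by (simp add: numeral_2_eq_2)
qed

lemma C6:
  assumes "x < m" "y < m" "r \<ge> 1"
  shows "real (card {A \<in> JV m r. x \<in> A \<and> y \<in> A}) =
    real ((m - 1) choose (r - 1)) - (if x = y then 0 else real ((m - 2) choose (r - 1)))"
proof (cases "x = y")
  case True
  then show ?thesis using C1[OF assms(1,3)] by simp
next
  case False
  have "{A \<in> JV m r. x \<in> A} = {A \<in> JV m r. x \<in> A \<and> y \<in> A} \<union> {A \<in> JV m r. x \<in> A \<and> y \<notin> A}" by auto
  moreover have "card ({A \<in> JV m r. x \<in> A \<and> y \<in> A} \<union> {A \<in> JV m r. x \<in> A \<and> y \<notin> A}) =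
     card {A \<in> JV m r. x \<in> A \<and> y \<in> A} + card {A \<in> JV m r. x \<in> A \<and> y \<notin> A}"
    by (rule card_Un_disjoint) (use JV_fin in auto)
  ultimately have "card {A \<in> JV m r. x \<in> A} = card {A \<in> JV m r. x \<in> A \<and> y \<in> A} + card {A \<in> JV m r. x \<in> A \<and> y \<notin> A}"
    by simp
  then show ?thesis using C1[OF assms(1,3)] C2[OF assms(1,2) False assms(3)] False by simp
qed

definition adjm :: "nat \<Rightarrow> nat set \<Rightarrow> nat set \<Rightarrow> real" where
  "adjm r A B = (if johnson_adj r A B then 1 else 0)"

lemma adjm_sym: "adjm r A B = adjm r B A"
  unfolding adjm_def johnson_adj_def by (simp add: Int_commute)

lemma JV_mem: "A \<in> JV m r \<longleftrightarrow> A \<subseteq> {0..<m} \<and> card A = r"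
  unfolding johnson_verts_def by simp

lemma nbr_bij:
  assumes A: "A \<in> JV m r" and r: "r \<ge> 1"
  shows "bij_betw (\<lambda>(x,y). insert y (A - {x})) (A \<times> ({0..<m} - A)) {B \<in> JV m r. johnson_adj r A B}"
proof -
  have Am: "A \<subseteq> {0..<m}" and cA: "card A = r" using A by (auto simp: JV_mem)
  have finA: "finite A" using Am fin_sub by blast
  show ?thesis unfolding bij_betw_def
  proof
    show "inj_on (\<lambda>(x,y). insert y (A - {x})) (A \<times> ({0..<m} - A))"
    proof (rule inj_onI, clarify)
      fix x y x' y'
      assume xy: "x \<in> A" "y \<in> {0..<m}" "y \<notin> A" "x' \<in> A" "y' \<in> {0..<m}" "y' \<notin> A"
        and e: "insert y (A - {x}) = insert y' (A - {x'})"
      have "y \<in> insert y' (A - {x'})" using e by blast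
      then have yy: "y = y'" using xy by auto
      have "x \<notin> insert y (A - {x})" using xy by auto
      then have "x \<notin> insert y' (A - {x'})" using e by simp
      then show "x = x' \<and> y = y'" using xy yy by auto
    qed
    show "(\<lambda>(x,y). insert y (A - {x})) ` (A \<times> ({0..<m} - A)) = {B \<in> JV m r. johnson_adj r A B}"
    proof (intro equalityI subsetI)
      fix B assume "B \<in> (\<lambda>(x,y). insert y (A - {x})) ` (A \<times> ({0..<m} - A))"
      then obtain x y where xy: "x \<in> A" "y \<in> {0..<m}" "y \<notin> A" "B = insert y (A - {x})" by auto
      have c1: "card (A - {x}) = r - 1" using xy(1) cA by (simp add: card_Diff_singleton)
      have "card B = Suc (r - 1)" using xy c1 finA by simp
      then have "card B = r" using r by simp
      moreover have "B \<subseteq> {0..<m}" using xy Am by auto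
      moreover have "A \<inter> B = A - {x}" using xy by auto
      ultimately show "B \<in> {B \<in> JV m r. johnson_adj r A B}"
        using c1 unfolding johnson_adj_def by (simp add: JV_mem)
    next
      fix B assume "B \<in> {B \<in> JV m r. johnson_adj r A B}"
      then have Bm: "B \<subseteq> {0..<m}" and cB: "card B = r" and cI: "card (A \<inter> B) = r - 1"
        unfolding johnson_adj_def by (auto simp: JV_mem)
      have finB: "finite B" using Bm fin_sub by blast
      have "card (A - B) = card A - card (A \<inter> B)" by (rule card_Diff_subset_Int) (use finA in simp)
      then have "card (A - B) = 1" using cA cI r by simp
      then obtain x where x: "A - B = {x}" by (rule card_1_singletonE)
      have "card (B - A) = card B - card (B \<inter> A)" by (rule card_Diff_subset_Int) (use finB in simp)
      then have "card (B - A) = 1" using cB cI r by (simp add: Int_commute)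
      then obtain y where y: "B - A = {y}" by (rule card_1_singletonE)
      have "B = insert y (A - {x})" using x y by blast
      moreover have "x \<in> A" "y \<in> {0..<m} - A" using x y Bm by auto
      ultimately show "B \<in> (\<lambda>(x,y). insert y (A - {x})) ` (A \<times> ({0..<m} - A))" by force
    qed
  qed
qed

lemma adj_sum:
  assumes A: "A \<in> JV m r" and r: "r \<ge> 1"
  shows "(\<Sum>B\<in>JV m r. adjm r A B * f B) = (\<Sum>(x,y)\<in>A \<times> ({0..<m} - A). f (insert y (A - {x})))"
proof -
  have "(\<Sum>B\<in>JV m r. adjm r A B * f B) = (\<Sum>B\<in>{B \<in> JV m r. johnson_adj r A B}. f B)"
    unfolding adjm_def by (simp add: sum.inter_filter[OF JV_fin], rule sum.cong, auto)
  also have "\<dots> = (\<Sum>p\<in>A \<times> ({0..<m} - A). f ((\<lambda>(x,y). insert y (A - {x})) p))"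
    by (rule sum.reindex_bij_betw[symmetric]) (rule nbr_bij[OF A r])
  also have "\<dots> = (\<Sum>(x,y)\<in>A \<times> ({0..<m} - A). f (insert y (A - {x})))"
    by (simp add: case_prod_beta)
  finally show ?thesis .
qed

lemma adj_updn:
  assumes A: "A \<in> JV m r" and r: "r \<ge> 1"
  shows "(\<Sum>B\<in>JV m r. adjm r A B * f B) = up (dn m f) A - real r * f A"
proof -
  have Am: "A \<subseteq> {0..<m}" and cA: "card A = r" using A by (auto simp: JV_mem)
  have finA: "finite A" using Am fin_sub by blast
  have "nb m f A = (\<Sum>(x,y)\<in>A \<times> ({0..<m} - A). f (insert y (A - {x})))"
    unfolding nb_def by (rule sum.cartesian_product) 
  then show ?thesis using adj_sum[OF A r, of f] up_dn[OF Am, of f] cA by simp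
qed


lemma eigI:
  assumes "\<And>x. x \<notin> V \<Longrightarrow> v x = 0" "x0 \<in> V" "v x0 \<noteq> 0" "\<And>x. x \<in> V \<Longrightarrow> (\<Sum>y\<in>V. M x y * v y) = \<mu> * v x"
  shows "\<mu> \<in> matrix_eigenvalues V M"
  unfolding matrix_eigenvalues_def using assms by blast

lemma eigE:
  assumes "\<mu> \<in> matrix_eigenvalues V M"
  obtains v x0 where "\<And>x. x \<notin> V \<Longrightarrow> v x = 0" "x0 \<in> V" "v x0 \<noteq> 0" "\<And>x. x \<in> V \<Longrightarrow> (\<Sum>y\<in>V. M x y * v y) = \<mu> * v x"
  using assms unfolding matrix_eigenvalues_def by blast

lemma lam_th: "johnson_lambda m r i = th m r i - real r"
  unfolding johnson_lambda_def th_def by (simp add: algebra_simps)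

lemma restrict_sum:
  "(\<Sum>B\<in>JV m r. M B * (if B \<in> JV m r then f B else 0)) = (\<Sum>B\<in>JV m r. M B * f B)"
  by (rule sum.cong) auto

lemma J1_sub:
  assumes r: "r \<ge> 1"
  shows "matrix_eigenvalues (JV m r) (adjm r) \<subseteq> {johnson_lambda m r i | i. i \<le> r}"
proof
  fix \<mu> assume "\<mu> \<in> matrix_eigenvalues (JV m r) (adjm r)"
  then obtain v x0 where v: "\<And>x. x \<notin> JV m r \<Longrightarrow> v x = 0" "x0 \<in> JV m r" "v x0 \<noteq> 0"
    "\<And>x. x \<in> JV m r \<Longrightarrow> (\<Sum>y\<in>JV m r. adjm r x y * v y) = \<mu> * v x" unfolding matrix_eigenvalues_def by blast
  have ev: "\<forall>A. A \<subseteq> {0..<m} \<and> card A = r \<longrightarrow> up (dn m v) A = (\<mu> + real r) * v A"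
  proof (intro allI impI)
    fix A assume "A \<subseteq> {0..<m} \<and> card A = r"
    then have A: "A \<in> JV m r" by (simp add: JV_mem)
    show "up (dn m v) A = (\<mu> + real r) * v A" using v(4)[OF A] adj_updn[OF A r, of v]
      by (simp add: algebra_simps)
  qed
  have nz: "\<exists>A. A \<subseteq> {0..<m} \<and> card A = r \<and> v A \<noteq> 0" using v(2,3) by (auto simp: JV_mem)
  have ss: "\<forall>T. T \<subseteq> {0..<m} \<and> card T + Suc r = r \<longrightarrow> ssum m (Suc r) v T = 0" by simp
  obtain i where i: "i \<le> r" "\<mu> + real r = th m r i"
    using spec_fwd[rule_format, OF nz ev[rule_format] ss[rule_format]] by blast
  have "\<mu> = johnson_lambda m r i" using i(2) lam_th[of m r i] by simp
  then show "\<mu> \<in> {johnson_lambda m r i | i. i \<le> r}" using i(1) by blast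
qed

lemma eig_from_ex:
  assumes r: "r \<ge> 1" and m: "2*r \<le> m" and i: "i \<le> r"
  obtains f where "\<exists>A\<in>JV m r. f A \<noteq> 0"
    "\<And>x. x \<notin> JV m r \<Longrightarrow> f x = 0"
    "\<And>A. A \<in> JV m r \<Longrightarrow> (\<Sum>B\<in>JV m r. adjm r A B * f B) = johnson_lambda m r i * f A"
    "\<And>j T. r - i + 1 \<le> j \<Longrightarrow> T \<subseteq> {0..<m} \<Longrightarrow> card T + j = r \<Longrightarrow> ssum m j f T = 0"
proof -
  have "2*i \<le> m" using m i by simp
  from spec_ex[OF this i] m obtain f where
    f: "\<exists>A. A \<subseteq> {0..<m} \<and> card A = r \<and> f A \<noteq> 0"
       "\<forall>A. A \<subseteq> {0..<m} \<and> card A = r \<longrightarrow> up (dn m f) A = th m r i * f A"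
       "\<forall>j T. r - i + 1 \<le> j \<and> T \<subseteq> {0..<m} \<and> card T + j = r \<longrightarrow> ssum m j f T = 0"
    by blast
  define g where "g A = (if A \<in> JV m r then f A else 0)" for A
  show ?thesis
  proof (rule that[of g])
    obtain A where "A \<subseteq> {0..<m}" "card A = r" "f A \<noteq> 0" using f(1) by blast
    then have A: "A \<in> JV m r" unfolding JV_mem by blast
    then have "g A = f A" unfolding g_def by simp
    with A \<open>f A \<noteq> 0\<close> show "\<exists>A\<in>JV m r. g A \<noteq> 0" by (intro bexI[of _ A]) simp_all
    show "\<And>x. x \<notin> JV m r \<Longrightarrow> g x = 0" by (simp add: g_def)
  next
    fix A assume A: "A \<in> JV m r"
    have "(\<Sum>B\<in>JV m r. adjm r A B * g B) = (\<Sum>B\<in>JV m r. adjm r A B * f B)"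
      unfolding g_def by (rule restrict_sum)
    also have "\<dots> = up (dn m f) A - real r * f A" by (rule adj_updn[OF A r])
    also have "\<dots> = johnson_lambda m r i * g A"
    proof -
      have "up (dn m f) A = th m r i * f A" using f(2) A by (simp add: JV_mem)
      moreover have "g A = f A" using A by (simp add: g_def)
      ultimately show ?thesis by (simp add: lam_th algebra_simps)
    qed
    finally show "(\<Sum>B\<in>JV m r. adjm r A B * g B) = johnson_lambda m r i * g A" .
  next
    fix j T assume jT: "r - i + 1 \<le> j" "T \<subseteq> {0..<m}" "card T + j = r"
    have "ssum m j g T = ssum m j f T"
      by (rule ssum_local) (use jT in \<open>simp add: g_def JV_mem\<close>)
    then show "ssum m j g T = 0" using f(3) jT by simp
  qed
qed

lemma J1:
  assumes r: "r \<ge> 1" and m: "2*r \<le> m"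
  shows "matrix_eigenvalues (JV m r) (adjm r) = {johnson_lambda m r i | i. i \<le> r}"
proof
  show "matrix_eigenvalues (JV m r) (adjm r) \<subseteq> {johnson_lambda m r i | i. i \<le> r}" by (rule J1_sub[OF r])
  show "{johnson_lambda m r i | i. i \<le> r} \<subseteq> matrix_eigenvalues (JV m r) (adjm r)"
  proof
    fix \<mu> assume "\<mu> \<in> {johnson_lambda m r i | i. i \<le> r}"
    then obtain i where i: "i \<le> r" "\<mu> = johnson_lambda m r i" by blast
    obtain f where f: "\<exists>A\<in>JV m r. f A \<noteq> 0" "\<And>x. x \<notin> JV m r \<Longrightarrow> f x = 0"
      "\<And>A. A \<in> JV m r \<Longrightarrow> (\<Sum>B\<in>JV m r. adjm r A B * f B) = johnson_lambda m r i * f A"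
      "\<And>j T. r - i + 1 \<le> j \<Longrightarrow> T \<subseteq> {0..<m} \<Longrightarrow> card T + j = r \<Longrightarrow> ssum m j f T = 0"
      by (elim eig_from_ex[OF r m i(1)])
    from f(1) obtain A0 where "A0 \<in> JV m r" "f A0 \<noteq> 0" by blast
    then show "\<mu> \<in> matrix_eigenvalues (JV m r) (adjm r)"
      using f(2,3) i(2) by (intro eigI[of _ f A0]) auto
  qed
qed


lemma s_nat:
  assumes r: "1 \<le> r" "r \<le> m"
  shows "(\<Sum>j=0..r. j * ((r choose j) * ((m - r) choose j))) = r * ((m - 1) choose r)"
proof -
  have t: "j * ((r choose j) * ((m - r) choose j)) = r * (((m - r) choose j) * ((r - 1) choose (r - j)))"
    if j: "j \<le> r" for j
  proof (cases "j = 0")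
    case True then show ?thesis using r by simp
  next
    case False
    have "j * (r choose j) = r * ((r - 1) choose (j - 1))"
      using False by (simp add: times_binomial_minus1_eq)
    moreover have "(r - 1) choose (j - 1) = (r - 1) choose (r - 1 - (j - 1))"
      by (rule binomial_symmetric) (use j in simp)
    moreover have "r - 1 - (j - 1) = r - j" using False j by simp
    ultimately show ?thesis by (simp add: algebra_simps)
  qed
  have "(\<Sum>j=0..r. j * ((r choose j) * ((m - r) choose j))) =
        (\<Sum>j\<le>r. r * (((m - r) choose j) * ((r - 1) choose (r - j))))"
    by (simp add: atLeast0AtMost t)
  also have "\<dots> = r * (\<Sum>j\<le>r. ((m - r) choose j) * ((r - 1) choose (r - j)))"
    by (simp add: sum_distrib_left)
  also have "(\<Sum>j\<le>r. ((m - r) choose j) * ((r - 1) choose (r - j))) = (m - r + (r - 1)) choose r"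
    by (rule vandermonde)
  also have "m - r + (r - 1) = m - 1" using r by simp
  finally show ?thesis .
qed

lemma s_eq:
  assumes r: "1 \<le> r" "r \<le> m"
  shows "johnson_s m r = real r * real ((m - 1) choose r)"
proof -
  have "johnson_s m r = real (\<Sum>j=0..r. j * ((r choose j) * ((m - r) choose j)))"
    unfolding johnson_s_def johnson_k_def by simp
  also have "\<dots> = real r * real ((m - 1) choose r)" using s_nat[OF r] by simp
  finally show ?thesis .
qed

lemma s_alt:
  assumes r: "1 \<le> r" "r \<le> m"
  shows "real r * real (m choose r) - real r * real ((m - 1) choose (r - 1)) = johnson_s m r"
proof -
  obtain m' r' where mr: "m = Suc m'" "r = Suc r'" using r by (metis Suc_le_D le_trans One_nat_def Suc_le_eq)
  have "m choose r = ((m - 1) choose r) + ((m - 1) choose (r - 1))" using mr by simp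
  then show ?thesis using s_eq[OF r] by (simp add: algebra_simps)
qed

lemma s_div:
  assumes r: "1 \<le> r" "r \<le> m" and m: "m \<ge> 2"
  shows "johnson_s m r / (real m - 1) = real ((m - 2) choose (r - 1))"
proof -
  have "r * ((m - 1) choose r) = (m - 1) * ((m - 1 - 1) choose (r - 1))"
    using r by (simp add: times_binomial_minus1_eq)
  then have "real r * real ((m - 1) choose r) = (real m - 1) * real ((m - 2) choose (r - 1))"
    using m by (metis (no_types, lifting) diff_diff_left of_nat_1 of_nat_diff of_nat_mult one_add_one le_trans one_le_numeral)
  moreover have "real m - 1 \<noteq> 0" using m by simp
  ultimately show ?thesis using s_eq[OF r] by (simp add: field_simps)
qed

lemma card_int_sum: "finite A \<Longrightarrow> real (card (A \<inter> B)) = (\<Sum>x\<in>A. if x \<in> B then 1 else 0)"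
  by (simp add: ind_sum Int_def)

lemma C3w:
  assumes A: "A \<in> JV m r"
  shows "(\<Sum>B\<in>JV m r. real (card (A \<inter> B)) * v B) = (\<Sum>x\<in>A. \<Sum>B\<in>JV m r. if x \<in> B then v B else 0)"
proof -
  have finA: "finite A" using A fin_sub by (auto simp: JV_mem)
  have "(\<Sum>B\<in>JV m r. real (card (A \<inter> B)) * v B) = (\<Sum>B\<in>JV m r. \<Sum>x\<in>A. if x \<in> B then v B else 0)"
    by (rule sum.cong[OF refl]) (simp add: card_int_sum[OF finA] sum_distrib_right, rule sum.cong, auto)
  also have "\<dots> = (\<Sum>x\<in>A. \<Sum>B\<in>JV m r. if x \<in> B then v B else 0)" by (rule sum.swap)
  finally show ?thesis .
qed

lemma count_sum: "(\<Sum>B\<in>JV m r. if x \<in> B then (1::real) else 0) = real (card {B \<in> JV m r. x \<in> B})"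
  by (rule ind_sum[OF JV_fin])

lemma C3:
  assumes A: "A \<in> JV m r" and r: "r \<ge> 1"
  shows "(\<Sum>B\<in>JV m r. real (card (A \<inter> B))) = real r * real ((m - 1) choose (r - 1))"
proof -
  have Am: "A \<subseteq> {0..<m}" "card A = r" using A by (auto simp: JV_mem)
  have "(\<Sum>B\<in>JV m r. real (card (A \<inter> B))) = (\<Sum>B\<in>JV m r. real (card (A \<inter> B)) * 1)" by simp
  also have "\<dots> = (\<Sum>x\<in>A. \<Sum>B\<in>JV m r. if x \<in> B then 1 else 0)" by (rule C3w[OF A])
  also have "\<dots> = (\<Sum>x\<in>A. real ((m - 1) choose (r - 1)))"
  proof (rule sum.cong[OF refl])
    fix x assume "x \<in> A"
    then have "x < m" using Am by auto
    then show "(\<Sum>B\<in>JV m r. if x \<in> B then 1 else 0) = real ((m - 1) choose (r - 1))"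
      using count_sum C1[OF _ r] by simp
  qed
  also have "\<dots> = real r * real ((m - 1) choose (r - 1))" using Am by simp
  finally show ?thesis .
qed

lemma C4:
  assumes A: "A \<in> JV m r" and r: "r \<ge> 1"
  shows "(\<Sum>B\<in>JV m r. adjm r A B) = real r * (real m - real r)"
proof -
  have Am: "A \<subseteq> {0..<m}" "card A = r" using A by (auto simp: JV_mem)
  have finA: "finite A" using Am fin_sub by blast
  have "(\<Sum>B\<in>JV m r. adjm r A B) = (\<Sum>B\<in>JV m r. adjm r A B * 1)" by simp
  also have "\<dots> = (\<Sum>(x,y)\<in>A \<times> ({0..<m} - A). 1)" by (rule adj_sum[OF A r])
  also have "\<dots> = real (card (A \<times> ({0..<m} - A)))" by simp
  also have "card (A \<times> ({0..<m} - A)) = r * (m - r)"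
    using Am finA by (simp add: card_cartesian_product card_Diff_subset)
  also have "real (r * (m - r)) = real r * (real m - real r)"
    using card_mono[OF _ Am(1)] Am(2) by simp
  finally show ?thesis .
qed

lemma C5:
  assumes A: "A \<in> JV m r" and r: "r \<ge> 1" and x: "x < m"
  shows "(\<Sum>B\<in>JV m r. adjm r A B * (if x \<in> B then 1 else 0)) =
    real r + johnson_lambda m r 1 * (if x \<in> A then 1 else 0)"
proof -
  have Am: "A \<subseteq> {0..<m}" "card A = r" using A by (auto simp: JV_mem)
  have finA: "finite A" using Am fin_sub by blast
  have cD: "card ({0..<m} - A) = m - r" using Am finA by (simp add: card_Diff_subset)
  have rm: "r \<le> m" using card_mono[OF _ Am(1)] Am(2) by simp
  have "(\<Sum>B\<in>JV m r. adjm r A B * (if x \<in> B then 1 else 0)) =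
    (\<Sum>(y,z)\<in>A \<times> ({0..<m} - A). (if x \<in> insert z (A - {y}) then 1 else 0))"
    by (rule adj_sum[OF A r])
  also have "\<dots> = (\<Sum>y\<in>A. \<Sum>z\<in>{0..<m} - A. (if x \<in> insert z (A - {y}) then 1 else 0))"
    by (rule sum.cartesian_product[symmetric])
  also have "\<dots> = real r + johnson_lambda m r 1 * (if x \<in> A then 1 else 0)"
  proof (cases "x \<in> A")
    case True
    have "(\<Sum>y\<in>A. \<Sum>z\<in>{0..<m} - A. (if x \<in> insert z (A - {y}) then 1 else (0::real))) =
          (\<Sum>y\<in>A. if y = x then 0 else real (m - r))"
    proof (rule sum.cong[OF refl])
      fix y assume "y \<in> A"
      have "(\<Sum>z\<in>{0..<m} - A. (if x \<in> insert z (A - {y}) then 1 else (0::real))) =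
            (\<Sum>z\<in>{0..<m} - A. (if y = x then 0 else 1))"
        by (rule sum.cong[OF refl]) (use True in auto)
      then show "(\<Sum>z\<in>{0..<m} - A. (if x \<in> insert z (A - {y}) then 1 else (0::real))) =
          (if y = x then 0 else real (m - r))" using cD by simp
    qed
    also have "\<dots> = (\<Sum>y\<in>A - {x}. real (m - r))"
      by (rule sum.mono_neutral_cong_right) (use finA in auto)
    also have "\<dots> = real (r - 1) * real (m - r)"
      using True Am finA by (simp add: card_Diff_singleton)
    finally show ?thesis using True r rm unfolding johnson_lambda_def
      by (simp add: of_nat_diff algebra_simps)
  next
    case False
    have "(\<Sum>y\<in>A. \<Sum>z\<in>{0..<m} - A. (if x \<in> insert z (A - {y}) then 1 else (0::real))) =
          (\<Sum>y\<in>A. 1)"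
    proof (rule sum.cong[OF refl])
      fix y assume "y \<in> A"
      have "(\<Sum>z\<in>{0..<m} - A. (if x \<in> insert z (A - {y}) then 1 else (0::real))) =
            (\<Sum>z\<in>{0..<m} - A. (if z = x then 1 else 0))"
        by (rule sum.cong[OF refl]) (use False in auto)
      also have "\<dots> = 1" using False x by (simp add: sum.delta)
      finally show "(\<Sum>z\<in>{0..<m} - A. (if x \<in> insert z (A - {y}) then 1 else (0::real))) = 1" .
    qed
    then show ?thesis using False Am by simp
  qed
  finally show ?thesis .
qed


definition lm :: "nat \<Rightarrow> nat \<Rightarrow> nat set \<Rightarrow> nat set \<Rightarrow> real" where
  "lm n r A B = real n * real (r - card (A \<inter> B)) + adjm r A B"

lemma lm_sym: "lm n r A B = lm n r B A"
  unfolding lm_def by (simp add: adjm_sym Int_commute)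

lemma card_int_le: "A \<in> JV m r \<Longrightarrow> card (A \<inter> B) \<le> r"
  unfolding JV_mem using fin_sub by (metis Int_lower1 card_mono)

lemma I2:
  assumes A: "A \<in> JV m r"
  shows "(\<Sum>B\<in>JV m r. lm n r A B * v B) =
    real n * (real r * (\<Sum>B\<in>JV m r. v B) - (\<Sum>x\<in>A. \<Sum>B\<in>JV m r. if x \<in> B then v B else 0))
    + (\<Sum>B\<in>JV m r. adjm r A B * v B)"
proof -
  have "(\<Sum>B\<in>JV m r. lm n r A B * v B) =
    (\<Sum>B\<in>JV m r. real n * real r * v B - real n * (real (card (A \<inter> B)) * v B) + adjm r A B * v B)"
  proof (rule sum.cong[OF refl])
    fix B assume "B \<in> JV m r"
    have "real (r - card (A \<inter> B)) = real r - real (card (A \<inter> B))"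
      using card_int_le[OF A, of B] by (simp add: of_nat_diff)
    then show "lm n r A B * v B = real n * real r * v B - real n * (real (card (A \<inter> B)) * v B) + adjm r A B * v B"
      unfolding lm_def by (simp add: algebra_simps)
  qed
  also have "\<dots> = real n * real r * (\<Sum>B\<in>JV m r. v B) - real n * (\<Sum>B\<in>JV m r. real (card (A \<inter> B)) * v B)
      + (\<Sum>B\<in>JV m r. adjm r A B * v B)"
    by (simp add: sum.distrib sum_subtractf sum_distrib_left)
  also have "(\<Sum>B\<in>JV m r. real (card (A \<inter> B)) * v B) = (\<Sum>x\<in>A. \<Sum>B\<in>JV m r. if x \<in> B then v B else 0)"
    by (rule C3w[OF A])
  finally show ?thesis by (simp add: algebra_simps)
qed

lemma lm_colsum:
  assumes B: "B \<in> JV m r" and r: "r \<ge> 1"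
  shows "(\<Sum>A\<in>JV m r. lm n r A B) = real n * johnson_s m r + johnson_lambda m r 0"
proof -
  have rm: "r \<le> m" using B card_mono[of "{0..<m}" B] by (auto simp: JV_mem)
  have "(\<Sum>A\<in>JV m r. lm n r A B) = (\<Sum>A\<in>JV m r. lm n r B A * 1)" by (simp add: lm_sym)
  also have "\<dots> = real n * (real r * (\<Sum>A\<in>JV m r. 1) - (\<Sum>x\<in>B. \<Sum>A\<in>JV m r. if x \<in> A then 1 else 0))
    + (\<Sum>A\<in>JV m r. adjm r B A * 1)" by (rule I2[OF B])
  also have "(\<Sum>x\<in>B. \<Sum>A\<in>JV m r. if x \<in> A then 1 else 0) = (\<Sum>A\<in>JV m r. real (card (B \<inter> A)) * 1)"
    by (rule C3w[OF B, symmetric])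
  also have "\<dots> = real r * real ((m - 1) choose (r - 1))" using C3[OF B r] by simp
  also have "(\<Sum>A\<in>JV m r. (1::real)) = real (m choose r)" by (simp add: JV_card)
  also have "(\<Sum>A\<in>JV m r. adjm r B A * 1) = real r * (real m - real r)" using C4[OF B r] by simp
  finally show ?thesis using s_alt[OF r rm] unfolding johnson_lambda_def by simp
qed

lemma lm_xsum:
  assumes B: "B \<in> JV m r" and r: "r \<ge> 1" and x0: "x0 < m"
  shows "(\<Sum>A\<in>JV m r. if x0 \<in> A then lm n r A B else 0) =
    real n * real ((m - 2) choose (r - 1)) * real r + real r
    + (johnson_lambda m r 1 - real n * real ((m - 2) choose (r - 1))) * (if x0 \<in> B then 1 else 0)"
proof -
  define a where "a = real ((m - 1) choose (r - 1))"
  define c where "c = real ((m - 2) choose (r - 1))"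
  have Bm: "B \<subseteq> {0..<m}" "card B = r" using B by (auto simp: JV_mem)
  have finB: "finite B" using Bm fin_sub by blast
  have "(\<Sum>A\<in>JV m r. if x0 \<in> A then lm n r A B else 0) =
        (\<Sum>A\<in>JV m r. lm n r B A * (if x0 \<in> A then 1 else 0))"
    by (rule sum.cong[OF refl]) (simp add: lm_sym)
  also have "\<dots> = real n * (real r * (\<Sum>A\<in>JV m r. if x0 \<in> A then 1 else 0)
      - (\<Sum>y\<in>B. \<Sum>A\<in>JV m r. if y \<in> A then (if x0 \<in> A then 1 else 0) else 0))
      + (\<Sum>A\<in>JV m r. adjm r B A * (if x0 \<in> A then 1 else 0))"
    by (rule I2[OF B])
  also have "(\<Sum>A\<in>JV m r. if x0 \<in> A then (1::real) else 0) = a"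
    unfolding a_def using count_sum C1[OF x0 r] by simp
  also have "(\<Sum>y\<in>B. \<Sum>A\<in>JV m r. if y \<in> A then (if x0 \<in> A then 1 else 0) else (0::real))
      = (\<Sum>y\<in>B. a - (if y = x0 then 0 else c))"
  proof (rule sum.cong[OF refl])
    fix y assume y: "y \<in> B"
    then have ym: "y < m" using Bm by auto
    have "(\<Sum>A\<in>JV m r. if y \<in> A then (if x0 \<in> A then 1 else 0) else (0::real)) =
          (\<Sum>A\<in>JV m r. if y \<in> A \<and> x0 \<in> A then 1 else 0)"
      by (rule sum.cong[OF refl]) simp
    also have "\<dots> = real (card {A \<in> JV m r. y \<in> A \<and> x0 \<in> A})" by (rule ind_sum[OF JV_fin])
    also have "\<dots> = a - (if y = x0 then 0 else c)" unfolding a_def c_def by (rule C6[OF ym x0 r])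
    finally show "(\<Sum>A\<in>JV m r. if y \<in> A then (if x0 \<in> A then 1 else 0) else (0::real)) =
          a - (if y = x0 then 0 else c)" .
  qed
  also have "(\<Sum>y\<in>B. a - (if y = x0 then 0 else c)) = real r * a - c * (real r - (if x0 \<in> B then 1 else 0))"
  proof -
    have "(\<Sum>y\<in>B. (if y = x0 then 0 else c)) = (\<Sum>y\<in>B - {x0}. c)"
      by (rule sum.mono_neutral_cong_right) (use finB in auto)
    also have "\<dots> = c * (real r - (if x0 \<in> B then 1 else 0))"
    proof (cases "x0 \<in> B")
      case True
      then have "card B \<ge> 1" using finB card_gt_0_iff by (metis One_nat_def Suc_leI empty_iff)
      then show ?thesis using True Bm by (simp add: card_Diff_singleton of_nat_diff)
    next
      case False
      then show ?thesis using Bm by simp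
    qed
    finally show ?thesis using Bm by (simp add: sum_subtractf)
  qed
  also have "(\<Sum>A\<in>JV m r. adjm r B A * (if x0 \<in> A then 1 else 0)) =
      real r + johnson_lambda m r 1 * (if x0 \<in> B then 1 else 0)" by (rule C5[OF B r x0])
  finally show ?thesis unfolding c_def[symmetric] by (simp add: algebra_simps)
qed

lemma ssum_single:
  assumes x: "x < m" and r: "r \<ge> 1"
  shows "ssum m (r - 1) v {x} = (\<Sum>B\<in>JV m r. if x \<in> B then v B else 0)"
proof -
  have "{S. {x} \<subseteq> S \<and> S \<subseteq> {0..<m} \<and> card S = card {x} + (r - 1)} = {B \<in> JV m r. x \<in> B}"
  proof (intro equalityI subsetI)
    fix S assume "S \<in> {S. {x} \<subseteq> S \<and> S \<subseteq> {0..<m} \<and> card S = card {x} + (r - 1)}"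
    then show "S \<in> {B \<in> JV m r. x \<in> B}" using r by (simp add: JV_mem)
  next
    fix S assume "S \<in> {B \<in> JV m r. x \<in> B}"
    then show "S \<in> {S. {x} \<subseteq> S \<and> S \<subseteq> {0..<m} \<and> card S = card {x} + (r - 1)}"
      using r x by (simp add: JV_mem)
  qed
  then show ?thesis unfolding ssum_def by (simp add: sum.inter_filter[OF JV_fin])
qed

lemma ssum_empty:
  "ssum m r v {} = (\<Sum>B\<in>JV m r. v B)"
proof -
  have "{S. {} \<subseteq> S \<and> S \<subseteq> {0..<m} \<and> card S = card {} + r} = JV m r"
    unfolding johnson_verts_def by simp
  then show ?thesis unfolding ssum_def by simp
qed


lemma J2_sub:
  assumes r: "r \<ge> 1" and rm: "r \<le> m" and m2: "m \<ge> 2"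
  shows "matrix_eigenvalues (JV m r) (lm n r) \<subseteq>
    {real n * johnson_s m r + johnson_lambda m r 0, johnson_lambda m r 1 - real n * johnson_s m r / (real m - 1)}
    \<union> {johnson_lambda m r i | i. 2 \<le> i \<and> i \<le> r}"
proof
  fix \<mu> assume "\<mu> \<in> matrix_eigenvalues (JV m r) (lm n r)"
  then obtain v x0 where v0: "\<And>x. x \<notin> JV m r \<Longrightarrow> v x = 0" and x0: "x0 \<in> JV m r" "v x0 \<noteq> 0"
    and ev: "\<And>A. A \<in> JV m r \<Longrightarrow> (\<Sum>B\<in>JV m r. lm n r A B * v B) = \<mu> * v A"
    unfolding matrix_eigenvalues_def by blast
  define \<sigma> where "\<sigma> = (\<Sum>B\<in>JV m r. v B)"
  define g where "g x = (\<Sum>B\<in>JV m r. if x \<in> B then v B else 0)" for x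
  define c where "c = real ((m - 2) choose (r - 1))"
  have sdiv: "johnson_s m r / (real m - 1) = c" unfolding c_def by (rule s_div[OF r rm m2])
  show "\<mu> \<in> {real n * johnson_s m r + johnson_lambda m r 0, johnson_lambda m r 1 - real n * johnson_s m r / (real m - 1)}
    \<union> {johnson_lambda m r i | i. 2 \<le> i \<and> i \<le> r}"
  proof (cases "\<sigma> = 0")
    case False
    have "(\<Sum>A\<in>JV m r. \<Sum>B\<in>JV m r. lm n r A B * v B) = (\<Sum>A\<in>JV m r. \<mu> * v A)"
      by (rule sum.cong[OF refl]) (rule ev)
    also have "\<dots> = \<mu> * \<sigma>" unfolding \<sigma>_def by (simp add: sum_distrib_left)
    finally have e1: "(\<Sum>A\<in>JV m r. \<Sum>B\<in>JV m r. lm n r A B * v B) = \<mu> * \<sigma>" .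
    have "(\<Sum>A\<in>JV m r. \<Sum>B\<in>JV m r. lm n r A B * v B) = (\<Sum>B\<in>JV m r. \<Sum>A\<in>JV m r. lm n r A B * v B)"
      by (rule sum.swap)
    also have "\<dots> = (\<Sum>B\<in>JV m r. (real n * johnson_s m r + johnson_lambda m r 0) * v B)"
    proof (rule sum.cong[OF refl])
      fix B assume B: "B \<in> JV m r"
      show "(\<Sum>A\<in>JV m r. lm n r A B * v B) = (real n * johnson_s m r + johnson_lambda m r 0) * v B"
        using lm_colsum[OF B r, of n] by (simp add: sum_distrib_right[symmetric])
    qed
    also have "\<dots> = (real n * johnson_s m r + johnson_lambda m r 0) * \<sigma>"
      unfolding \<sigma>_def by (simp add: sum_distrib_left)
    finally have "\<mu> = real n * johnson_s m r + johnson_lambda m r 0" using e1 False by simp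
    then show ?thesis by simp
  next
    case s0: True
    show ?thesis
    proof (cases "\<exists>x<m. g x \<noteq> 0")
      case True
      then obtain x1 where x1: "x1 < m" "g x1 \<noteq> 0" by blast
      have "(\<Sum>A\<in>JV m r. if x1 \<in> A then (\<Sum>B\<in>JV m r. lm n r A B * v B) else 0) =
            (\<Sum>A\<in>JV m r. if x1 \<in> A then \<mu> * v A else 0)"
        by (rule sum.cong[OF refl]) (simp add: ev)
      also have "\<dots> = \<mu> * g x1" unfolding g_def by (simp add: sum_distrib_left if_distrib, rule sum.cong, auto)
      finally have e1: "(\<Sum>A\<in>JV m r. if x1 \<in> A then (\<Sum>B\<in>JV m r. lm n r A B * v B) else 0) = \<mu> * g x1" .
      have "(\<Sum>A\<in>JV m r. if x1 \<in> A then (\<Sum>B\<in>JV m r. lm n r A B * v B) else 0) =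
            (\<Sum>A\<in>JV m r. \<Sum>B\<in>JV m r. (if x1 \<in> A then lm n r A B else 0) * v B)"
        by (rule sum.cong[OF refl]) (simp add: sum_distrib_right)
      also have "\<dots> = (\<Sum>B\<in>JV m r. \<Sum>A\<in>JV m r. (if x1 \<in> A then lm n r A B else 0) * v B)"
        by (rule sum.swap)
      also have "\<dots> = (\<Sum>B\<in>JV m r. (real n * c * real r + real r) * v B
           + (johnson_lambda m r 1 - real n * c) * (if x1 \<in> B then v B else 0))"
      proof (rule sum.cong[OF refl])
        fix B assume B: "B \<in> JV m r"
        have "(\<Sum>A\<in>JV m r. (if x1 \<in> A then lm n r A B else 0) * v B) =
              (\<Sum>A\<in>JV m r. (if x1 \<in> A then lm n r A B else 0)) * v B"
          by (simp add: sum_distrib_right)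
        also have "\<dots> = (real n * c * real r + real r
           + (johnson_lambda m r 1 - real n * c) * (if x1 \<in> B then 1 else 0)) * v B"
          using lm_xsum[OF B r x1(1), of n] unfolding c_def by simp
        also have "\<dots> = (real n * c * real r + real r) * v B + (johnson_lambda m r 1 - real n * c) * (if x1 \<in> B then v B else 0)"
          by (cases "x1 \<in> B") (simp_all add: algebra_simps)
        finally show "(\<Sum>A\<in>JV m r. (if x1 \<in> A then lm n r A B else 0) * v B) =
           (real n * c * real r + real r) * v B + (johnson_lambda m r 1 - real n * c) * (if x1 \<in> B then v B else 0)" .
      qed
      also have "\<dots> = (real n * c * real r + real r) * \<sigma> + (johnson_lambda m r 1 - real n * c) * g x1"
        unfolding \<sigma>_def g_def by (simp add: sum.distrib sum_distrib_left)
      finally have "\<mu> * g x1 = (johnson_lambda m r 1 - real n * c) * g x1" using e1 s0 by simp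
      then have "\<mu> = johnson_lambda m r 1 - real n * c" using x1(2) by simp
      then have "\<mu> = johnson_lambda m r 1 - real n * johnson_s m r / (real m - 1)"
        using sdiv by (simp add: times_divide_eq_right[symmetric])
      then show ?thesis by simp
    next
      case False
      then have g0: "\<And>x. x < m \<Longrightarrow> g x = 0" by blast
      have adj_ev: "(\<Sum>B\<in>JV m r. adjm r A B * v B) = \<mu> * v A" if A: "A \<in> JV m r" for A
      proof -
        have "(\<Sum>x\<in>A. g x) = 0"
          by (rule sum.neutral) (use A g0 in \<open>auto simp: JV_mem\<close>)
        then show ?thesis using I2[OF A, of n v] ev[OF A] s0 unfolding \<sigma>_def g_def by simp
      qed
      have evu: "\<forall>A. A \<subseteq> {0..<m} \<and> card A = r \<longrightarrow> up (dn m v) A = (\<mu> + real r) * v A"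
      proof (intro allI impI)
        fix A assume "A \<subseteq> {0..<m} \<and> card A = r"
        then have A: "A \<in> JV m r" by (simp add: JV_mem)
        show "up (dn m v) A = (\<mu> + real r) * v A" using adj_ev[OF A] adj_updn[OF A r, of v]
          by (simp add: algebra_simps)
      qed
      have nz: "\<exists>A. A \<subseteq> {0..<m} \<and> card A = r \<and> v A \<noteq> 0" using x0 by (auto simp: JV_mem)
      have ss: "\<forall>T. T \<subseteq> {0..<m} \<and> card T + (r - 1) = r \<longrightarrow> ssum m (r - 1) v T = 0"
      proof (intro allI impI)
        fix T assume T: "T \<subseteq> {0..<m} \<and> card T + (r - 1) = r"
        then have "card T = 1" using r by arith
        then obtain x where x: "T = {x}" by (rule card_1_singletonE)
        then have xm: "x < m" using T by auto
        then show "ssum m (r - 1) v T = 0" using ssum_single[OF xm r, of v] g0[OF xm] x unfolding g_def by simp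
      qed
      obtain i where i: "i \<le> r" "r < i + (r - 1)" "\<mu> + real r = th m r i"
        using spec_fwd[rule_format, OF nz evu[rule_format] ss[rule_format]] by blast
      have "\<mu> = johnson_lambda m r i" using i(3) lam_th[of m r i] by simp
      moreover have "2 \<le> i" using i(2) r by arith
      ultimately show ?thesis using i(1) by blast
    qed
  qed
qed


lemma mu0_ev:
  assumes r: "r \<ge> 1" and rm: "r \<le> m"
  shows "real n * johnson_s m r + johnson_lambda m r 0 \<in> matrix_eigenvalues (JV m r) (lm n r)"
proof -
  define v where "v A = (if A \<in> JV m r then (1::real) else 0)" for A
  have A0: "{0..<r} \<in> JV m r" using rm by (simp add: JV_mem)
  show ?thesis
  proof (rule eigI[of _ v "{0..<r}"])
    show "\<And>x. x \<notin> JV m r \<Longrightarrow> v x = 0" by (simp add: v_def)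
    show "{0..<r} \<in> JV m r" by (rule A0)
    show "v {0..<r} \<noteq> 0" using A0 by (simp add: v_def)
  next
    fix A assume A: "A \<in> JV m r"
    have "(\<Sum>B\<in>JV m r. lm n r A B * v B) = (\<Sum>B\<in>JV m r. lm n r B A)"
      by (rule sum.cong[OF refl]) (simp add: v_def lm_sym)
    also have "\<dots> = real n * johnson_s m r + johnson_lambda m r 0" by (rule lm_colsum[OF A r])
    finally show "(\<Sum>B\<in>JV m r. lm n r A B * v B) = (real n * johnson_s m r + johnson_lambda m r 0) * v A"
      using A by (simp add: v_def)
  qed
qed

lemma mui_ev:
  assumes r: "r \<ge> 1" and m: "2*r \<le> m" and i: "2 \<le> i" "i \<le> r"
  shows "johnson_lambda m r i \<in> matrix_eigenvalues (JV m r) (lm n r)"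
proof -
  obtain f where f: "\<exists>A\<in>JV m r. f A \<noteq> 0" "\<And>x. x \<notin> JV m r \<Longrightarrow> f x = 0"
      "\<And>A. A \<in> JV m r \<Longrightarrow> (\<Sum>B\<in>JV m r. adjm r A B * f B) = johnson_lambda m r i * f A"
      "\<And>j T. r - i + 1 \<le> j \<Longrightarrow> T \<subseteq> {0..<m} \<Longrightarrow> card T + j = r \<Longrightarrow> ssum m j f T = 0"
    by (elim eig_from_ex[OF r m i(2)])
  from f(1) obtain A0 where A0: "A0 \<in> JV m r" "f A0 \<noteq> 0" by blast
  have s0: "(\<Sum>B\<in>JV m r. f B) = 0" using f(4)[of r "{}"] ssum_empty[of m r f] i by simp
  have g0: "(\<Sum>B\<in>JV m r. if x \<in> B then f B else 0) = 0" if x: "x < m" for x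
  proof -
    have "ssum m (r - 1) f {x} = 0" using f(4)[of "r - 1" "{x}"] x i r by simp
    then show ?thesis using ssum_single[OF x r, of f] by simp
  qed
  show ?thesis
  proof (rule eigI[of _ f A0])
    show "\<And>x. x \<notin> JV m r \<Longrightarrow> f x = 0" by (rule f(2))
  next
    fix A assume A: "A \<in> JV m r"
    have "(\<Sum>x\<in>A. \<Sum>B\<in>JV m r. if x \<in> B then f B else 0) = 0"
      by (rule sum.neutral) (use A g0 in \<open>auto simp: JV_mem\<close>)
    then show "(\<Sum>B\<in>JV m r. lm n r A B * f B) = johnson_lambda m r i * f A"
      using I2[OF A, of n f] s0 f(3)[OF A] by simp
  qed (use A0 in auto)
qed

lemma mu1_ev:
  assumes r: "r \<ge> 1" and m: "2*r \<le> m" and m2: "m \<ge> 2"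
  shows "johnson_lambda m r 1 - real n * johnson_s m r / (real m - 1) \<in> matrix_eigenvalues (JV m r) (lm n r)"
proof -
  have rm: "r \<le> m" using m by simp
  define c where "c = real ((m - 2) choose (r - 1))"
  define a where "a = real ((m - 1) choose (r - 1))"
  have sdiv: "johnson_s m r / (real m - 1) = c" unfolding c_def by (rule s_div[OF r rm m2])
  define w where "w A = (if 0 \<in> A then 1 else 0) - (if 1 \<in> A then 1 else (0::real))" for A :: "nat set"
  define v where "v A = (if A \<in> JV m r then w A else 0)" for A
  define A0 where "A0 = insert 0 {2..<Suc r}"
  have A0V: "A0 \<in> JV m r"
  proof -
    have "card A0 = Suc (card {2..<Suc r})" unfolding A0_def by simp
    also have "\<dots> = r" using r by simp
    finally show ?thesis using m r unfolding A0_def JV_mem by auto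
  qed
  have wA0: "w A0 = 1" unfolding w_def A0_def by simp
  have sv: "(\<Sum>B\<in>JV m r. v B) = 0"
  proof -
    have "(\<Sum>B\<in>JV m r. v B) = (\<Sum>B\<in>JV m r. if 0 \<in> B then 1 else 0) - (\<Sum>B\<in>JV m r. if 1 \<in> B then 1 else (0::real))"
      unfolding v_def w_def by (simp add: sum_subtractf)
    also have "\<dots> = 0" using count_sum C1[of 0 m r] C1[of 1 m r] m2 r by simp
    finally show ?thesis .
  qed
  have gv: "(\<Sum>B\<in>JV m r. if x \<in> B then v B else 0) = c * ((if x = 0 then 1 else 0) - (if x = 1 then 1 else 0))"
    if x: "x < m" for x
  proof -
    have "(\<Sum>B\<in>JV m r. if x \<in> B then v B else 0) =
      (\<Sum>B\<in>JV m r. if x \<in> B \<and> 0 \<in> B then 1 else 0) - (\<Sum>B\<in>JV m r. if x \<in> B \<and> 1 \<in> B then 1 else (0::real))"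
      unfolding v_def w_def by (simp add: sum_subtractf[symmetric]) (rule sum.cong, auto)
    also have "\<dots> = real (card {B \<in> JV m r. x \<in> B \<and> 0 \<in> B}) - real (card {B \<in> JV m r. x \<in> B \<and> 1 \<in> B})"
      by (simp add: ind_sum[OF JV_fin])
    also have "\<dots> = c * ((if x = 0 then 1 else 0) - (if x = 1 then 1 else 0))"
      using C6[OF x _ r, of 0] C6[OF x _ r, of 1] m2 unfolding c_def by auto
    finally show ?thesis .
  qed
  show ?thesis
  proof (rule eigI[of _ v A0])
    show "\<And>x. x \<notin> JV m r \<Longrightarrow> v x = 0" by (simp add: v_def)
    show "A0 \<in> JV m r" by (rule A0V)
    show "v A0 \<noteq> 0" using A0V wA0 by (simp add: v_def)
  next
    fix A assume A: "A \<in> JV m r"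
    have Am: "A \<subseteq> {0..<m}" using A by (simp add: JV_mem)
    have finA: "finite A" using Am fin_sub by blast
    have "(\<Sum>x\<in>A. \<Sum>B\<in>JV m r. if x \<in> B then v B else 0) = (\<Sum>x\<in>A. c * ((if x = 0 then 1 else 0) - (if x = 1 then 1 else 0)))"
      by (rule sum.cong[OF refl]) (use Am gv in auto)
    also have "\<dots> = c * w A"
      unfolding w_def using finA by (simp add: sum_distrib_left[symmetric] sum_subtractf sum.delta)
    finally have e1: "(\<Sum>x\<in>A. \<Sum>B\<in>JV m r. if x \<in> B then v B else 0) = c * w A" .
    have "(\<Sum>B\<in>JV m r. adjm r A B * v B) =
      (\<Sum>B\<in>JV m r. adjm r A B * (if 0 \<in> B then 1 else 0)) - (\<Sum>B\<in>JV m r. adjm r A B * (if 1 \<in> B then 1 else 0))"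
      unfolding v_def w_def by (simp add: sum_subtractf[symmetric] right_diff_distrib) 
    also have "\<dots> = johnson_lambda m r 1 * w A"
      using C5[OF A r, of 0] C5[OF A r, of 1] m2 unfolding w_def by (simp add: algebra_simps)
    finally have e2: "(\<Sum>B\<in>JV m r. adjm r A B * v B) = johnson_lambda m r 1 * w A" .
    have "(\<Sum>B\<in>JV m r. lm n r A B * v B) = real n * (- (c * w A)) + johnson_lambda m r 1 * w A"
      using I2[OF A, of n v] sv e1 e2 by simp
    also have "\<dots> = (johnson_lambda m r 1 - real n * johnson_s m r / (real m - 1)) * v A"
      using A sdiv by (simp add: v_def algebra_simps times_divide_eq_right[symmetric])
    finally show "(\<Sum>B\<in>JV m r. lm n r A B * v B) = (johnson_lambda m r 1 - real n * johnson_s m r / (real m - 1)) * v A" .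
  qed
qed


lemma J2:
  assumes r: "r \<ge> 1" and m: "2*r \<le> m" and m2: "m \<ge> 2"
  shows "matrix_eigenvalues (JV m r) (lm n r) =
    {real n * johnson_s m r + johnson_lambda m r 0, johnson_lambda m r 1 - real n * johnson_s m r / (real m - 1)}
    \<union> {johnson_lambda m r i | i. 2 \<le> i \<and> i \<le> r}"
proof
  show "matrix_eigenvalues (JV m r) (lm n r) \<subseteq>
    {real n * johnson_s m r + johnson_lambda m r 0, johnson_lambda m r 1 - real n * johnson_s m r / (real m - 1)}
    \<union> {johnson_lambda m r i | i. 2 \<le> i \<and> i \<le> r}" by (rule J2_sub) (use r m m2 in auto)
  show "{real n * johnson_s m r + johnson_lambda m r 0, johnson_lambda m r 1 - real n * johnson_s m r / (real m - 1)}
    \<union> {johnson_lambda m r i | i. 2 \<le> i \<and> i \<le> r} \<subseteq> matrix_eigenvalues (JV m r) (lm n r)"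
    using mu0_ev[OF r, of m n] mu1_ev[OF r m m2, of n] mui_ev[OF r m] m by auto
qed

lemma eig_cong:
  assumes "\<And>x y. x \<in> V \<Longrightarrow> y \<in> V \<Longrightarrow> M x y = M' x y"
  shows "matrix_eigenvalues V M = matrix_eigenvalues V M'"
proof -
  have row: "(\<Sum>y\<in>V. M x y * v y) = (\<Sum>y\<in>V. M' x y * v y)" if "x \<in> V" for x v
    using assms that by (intro sum.cong) auto
  have "(\<forall>x\<in>V. (\<Sum>y\<in>V. M x y * v y) = \<mu> * v x) \<longleftrightarrow> (\<forall>x\<in>V. (\<Sum>y\<in>V. M' x y * v y) = \<mu> * v x)" for v \<mu>
    using row by auto
  then show ?thesis unfolding matrix_eigenvalues_def by simp
qed

lemma eig_shift:
  assumes fin: "finite V"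
  shows "matrix_eigenvalues V (\<lambda>x y. M x y + (if x = y then c else 0)) = (\<lambda>t. t + c) ` matrix_eigenvalues V M"
proof -
  have row: "(\<Sum>y\<in>V. (M x y + (if x = y then c else 0)) * v y) = (\<Sum>y\<in>V. M x y * v y) + c * v x"
    if "x \<in> V" for x v
  proof -
    have "(\<Sum>y\<in>V. (M x y + (if x = y then c else 0)) * v y) = (\<Sum>y\<in>V. M x y * v y) + (\<Sum>y\<in>V. if x = y then c * v y else 0)"
    proof -
      have "(\<Sum>y\<in>V. (M x y + (if x = y then c else 0)) * v y) = (\<Sum>y\<in>V. M x y * v y + (if x = y then c * v y else 0))"
        by (rule sum.cong) (auto simp: algebra_simps)
      then show ?thesis by (simp add: sum.distrib)
    qed
    also have "(\<Sum>y\<in>V. if x = y then c * v y else 0) = c * v x" using fin that by (simp add: sum.delta)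
    finally show ?thesis .
  qed
  show ?thesis
  proof (intro equalityI subsetI)
    fix \<mu> assume "\<mu> \<in> matrix_eigenvalues V (\<lambda>x y. M x y + (if x = y then c else 0))"
    then obtain v where v: "\<forall>x. x \<notin> V \<longrightarrow> v x = 0" "\<exists>x\<in>V. v x \<noteq> 0"
      "\<forall>x\<in>V. (\<Sum>y\<in>V. (M x y + (if x = y then c else 0)) * v y) = \<mu> * v x"
      unfolding matrix_eigenvalues_def by blast
    have "\<forall>x\<in>V. (\<Sum>y\<in>V. M x y * v y) = (\<mu> - c) * v x" using v(3) row by (simp add: algebra_simps)
    then have "\<mu> - c \<in> matrix_eigenvalues V M" unfolding matrix_eigenvalues_def using v(1,2) by blast
    then show "\<mu> \<in> (\<lambda>t. t + c) ` matrix_eigenvalues V M" by (intro image_eqI[of _ _ "\<mu> - c"]) auto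
  next
    fix \<mu> assume "\<mu> \<in> (\<lambda>t. t + c) ` matrix_eigenvalues V M"
    then obtain t where t: "t \<in> matrix_eigenvalues V M" "\<mu> = t + c" by blast
    then obtain v where v: "\<forall>x. x \<notin> V \<longrightarrow> v x = 0" "\<exists>x\<in>V. v x \<noteq> 0"
      "\<forall>x\<in>V. (\<Sum>y\<in>V. M x y * v y) = t * v x"
      unfolding matrix_eigenvalues_def by blast
    have "\<forall>x\<in>V. (\<Sum>y\<in>V. (M x y + (if x = y then c else 0)) * v y) = \<mu> * v x"
      using v(3) row t(2) by (simp add: algebra_simps)
    then show "\<mu> \<in> matrix_eigenvalues V (\<lambda>x y. M x y + (if x = y then c else 0))"
      unfolding matrix_eigenvalues_def using v(1,2) by blast
  qed
qed

lemma kron_row: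
  fixes n i :: nat and M :: "nat \<times> 'a \<Rightarrow> nat \<times> 'a \<Rightarrow> real" and v :: "nat \<times> 'a \<Rightarrow> real"
  assumes fin: "finite P" and i: "i < n" and A: "A \<in> P"
    and M: "\<And>j B. j < n \<Longrightarrow> B \<in> P \<Longrightarrow> M (i, A) (j, B) = X A B + (if i = j then Y A B else 0)"
  shows "(\<Sum>q\<in>{0..<n} \<times> P. M (i, A) q * v q) =
    (\<Sum>B\<in>P. X A B * (\<Sum>j<n. v (j, B))) + (\<Sum>B\<in>P. Y A B * v (i, B))"
proof -
  have "(\<Sum>j\<in>{0..<n}. \<Sum>B\<in>P. M (i, A) (j, B) * v (j, B)) = (\<Sum>(j,B)\<in>{0..<n} \<times> P. M (i, A) (j, B) * v (j, B))"
    by (rule sum.cartesian_product)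
  also have "\<dots> = (\<Sum>q\<in>{0..<n} \<times> P. M (i, A) q * v q)" by (rule sum.cong) auto
  finally have "(\<Sum>q\<in>{0..<n} \<times> P. M (i, A) q * v q) = (\<Sum>j\<in>{0..<n}. \<Sum>B\<in>P. M (i, A) (j, B) * v (j, B))" by simp
  also have "\<dots> = (\<Sum>j\<in>{0..<n}. \<Sum>B\<in>P. X A B * v (j, B) + (if i = j then Y A B * v (j, B) else 0))"
    by (intro sum.cong refl) (simp add: M distrib_right)
  also have "\<dots> = (\<Sum>j\<in>{0..<n}. \<Sum>B\<in>P. X A B * v (j, B)) + (\<Sum>j\<in>{0..<n}. \<Sum>B\<in>P. if i = j then Y A B * v (j, B) else 0)"
    by (simp add: sum.distrib)
  also have "(\<Sum>j\<in>{0..<n}. \<Sum>B\<in>P. X A B * v (j, B)) = (\<Sum>B\<in>P. X A B * (\<Sum>j<n. v (j, B)))"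
    by (subst sum.swap) (simp add: sum_distrib_left atLeast0LessThan)
  also have "(\<Sum>j\<in>{0..<n}. \<Sum>B\<in>P. if i = j then Y A B * v (j, B) else 0) = (\<Sum>B\<in>P. Y A B * v (i, B))"
    by (subst sum.swap) (simp add: sum.delta i)
  finally show ?thesis .
qed

lemma kron_eig:
  fixes n :: nat and M :: "nat \<times> 'a \<Rightarrow> nat \<times> 'a \<Rightarrow> real"
  assumes fin: "finite P" and n: "n \<ge> 2"
    and M: "\<And>i j A B. i < n \<Longrightarrow> j < n \<Longrightarrow> A \<in> P \<Longrightarrow> B \<in> P \<Longrightarrow>
      M (i, A) (j, B) = X A B + (if i = j then Y A B else 0)"
  shows "matrix_eigenvalues ({0..<n} \<times> P) M =
    matrix_eigenvalues P Y \<union> matrix_eigenvalues P (\<lambda>A B. real n * X A B + Y A B)"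
proof (intro equalityI subsetI)
  fix \<mu> assume "\<mu> \<in> matrix_eigenvalues ({0..<n} \<times> P) M"
  then obtain v where v0: "\<forall>q. q \<notin> {0..<n} \<times> P \<longrightarrow> v q = 0"
    and vnz: "\<exists>q\<in>{0..<n} \<times> P. v q \<noteq> 0"
    and ev: "\<forall>q\<in>{0..<n} \<times> P. (\<Sum>q'\<in>{0..<n} \<times> P. M q q' * v q') = \<mu> * v q"
    unfolding matrix_eigenvalues_def by blast
  define w where "w B = (\<Sum>j<n. v (j, B))" for B
  have ev2: "(\<Sum>B\<in>P. X A B * w B) + (\<Sum>B\<in>P. Y A B * v (i, B)) = \<mu> * v (i, A)"
    if i: "i < n" and A: "A \<in> P" for i A
  proof -
    have "(\<Sum>q'\<in>{0..<n} \<times> P. M (i, A) q' * v q') = \<mu> * v (i, A)" using ev i A by auto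
    then show ?thesis using kron_row[OF fin i A, of M X Y v] M i A unfolding w_def by simp
  qed
  have evw: "(\<Sum>B\<in>P. (real n * X A B + Y A B) * w B) = \<mu> * w A" if A: "A \<in> P" for A
  proof -
    have "(\<Sum>i<n. (\<Sum>B\<in>P. X A B * w B) + (\<Sum>B\<in>P. Y A B * v (i, B))) = (\<Sum>i<n. \<mu> * v (i, A))"
      by (rule sum.cong) (use ev2 A in auto)
    then have "real n * (\<Sum>B\<in>P. X A B * w B) + (\<Sum>i<n. \<Sum>B\<in>P. Y A B * v (i, B)) = \<mu> * w A"
      unfolding w_def by (simp add: sum.distrib sum_distrib_left)
    moreover have "(\<Sum>i<n. \<Sum>B\<in>P. Y A B * v (i, B)) = (\<Sum>B\<in>P. Y A B * w B)"
      unfolding w_def by (subst sum.swap) (simp add: sum_distrib_left)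
    ultimately show ?thesis by (simp add: sum.distrib algebra_simps sum_distrib_left)
  qed
  show "\<mu> \<in> matrix_eigenvalues P Y \<union> matrix_eigenvalues P (\<lambda>A B. real n * X A B + Y A B)"
  proof (cases "\<exists>A\<in>P. w A \<noteq> 0")
    case True
    have "\<forall>B. B \<notin> P \<longrightarrow> w B = 0" unfolding w_def using v0 by auto
    then have "\<mu> \<in> matrix_eigenvalues P (\<lambda>A B. real n * X A B + Y A B)"
      unfolding matrix_eigenvalues_def using True evw by blast
    then show ?thesis by blast
  next
    case False
    then have w0: "\<And>B. B \<in> P \<Longrightarrow> w B = 0" by blast
    obtain i0 A0 where q0: "i0 < n" "A0 \<in> P" "v (i0, A0) \<noteq> 0" using vnz by auto
    have "\<forall>B. B \<notin> P \<longrightarrow> v (i0, B) = 0" using v0 by auto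
    moreover have "\<forall>A\<in>P. (\<Sum>B\<in>P. Y A B * v (i0, B)) = \<mu> * v (i0, A)"
      using ev2[OF q0(1)] w0 by simp
    ultimately have "\<mu> \<in> matrix_eigenvalues P Y"
      unfolding matrix_eigenvalues_def using q0 by (intro CollectI exI[of _ "\<lambda>B. v (i0, B)"]) auto
    then show ?thesis by blast
  qed
next
  fix \<mu> assume "\<mu> \<in> matrix_eigenvalues P Y \<union> matrix_eigenvalues P (\<lambda>A B. real n * X A B + Y A B)"
  then show "\<mu> \<in> matrix_eigenvalues ({0..<n} \<times> P) M"
  proof
    assume "\<mu> \<in> matrix_eigenvalues P Y"
    then obtain u A0 where u0: "\<forall>B. B \<notin> P \<longrightarrow> u B = 0" and A0: "A0 \<in> P" "u A0 \<noteq> 0"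
      and ev: "\<forall>A\<in>P. (\<Sum>B\<in>P. Y A B * u B) = \<mu> * u A"
      unfolding matrix_eigenvalues_def by blast
    define c where "c i = (if i = 0 then 1 else if i = 1 then -1 else (0::real))" for i :: nat
    define v where "v q = c (fst q) * u (snd q)" for q
    have csum: "(\<Sum>j<n. c j) = 0"
    proof -
      have "{0, 1} \<subseteq> {..<n}" using n by auto
      then have "(\<Sum>j<n. c j) = (\<Sum>j\<in>{..<n} - {0, 1}. c j) + (\<Sum>j\<in>{0,1}. c j)"
        by (rule sum.subset_diff) simp
      also have "(\<Sum>j\<in>{..<n} - {0, 1}. c j) = 0" by (rule sum.neutral) (auto simp: c_def)
      finally show ?thesis by (simp add: c_def)
    qed
    show ?thesis unfolding matrix_eigenvalues_def
    proof (intro CollectI exI[of _ v] conjI)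
      show "\<forall>q. q \<notin> {0..<n} \<times> P \<longrightarrow> v q = 0"
        using u0 n by (auto simp: v_def c_def)
      show "\<exists>q\<in>{0..<n} \<times> P. v q \<noteq> 0"
        using A0 n by (intro bexI[of _ "(0, A0)"]) (auto simp: v_def c_def)
      show "\<forall>q\<in>{0..<n} \<times> P. (\<Sum>q'\<in>{0..<n} \<times> P. M q q' * v q') = \<mu> * v q"
      proof
        fix q assume "q \<in> {0..<n} \<times> P"
        then obtain i A where q: "q = (i, A)" "i < n" "A \<in> P" by auto
        have "(\<Sum>q'\<in>{0..<n} \<times> P. M (i, A) q' * v q') =
          (\<Sum>B\<in>P. X A B * (\<Sum>j<n. v (j, B))) + (\<Sum>B\<in>P. Y A B * v (i, B))"
          by (rule kron_row[OF fin q(2,3)]) (use M q in auto)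
        also have "\<dots> = c i * (\<Sum>B\<in>P. Y A B * u B)"
        proof -
          have "(\<Sum>j<n. v (j, B)) = 0" for B
            unfolding v_def using csum by (simp add: sum_distrib_right[symmetric])
          moreover have "(\<Sum>B\<in>P. Y A B * v (i, B)) = c i * (\<Sum>B\<in>P. Y A B * u B)"
            unfolding v_def by (simp add: sum_distrib_left algebra_simps)
          ultimately show ?thesis by simp
        qed
        finally show "(\<Sum>q'\<in>{0..<n} \<times> P. M q q' * v q') = \<mu> * v q"
          using ev q by (simp add: v_def)
      qed
    qed
  next
    assume "\<mu> \<in> matrix_eigenvalues P (\<lambda>A B. real n * X A B + Y A B)"
    then obtain u A0 where u0: "\<forall>B. B \<notin> P \<longrightarrow> u B = 0" and A0: "A0 \<in> P" "u A0 \<noteq> 0"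
      and ev: "\<forall>A\<in>P. (\<Sum>B\<in>P. (real n * X A B + Y A B) * u B) = \<mu> * u A"
      unfolding matrix_eigenvalues_def by blast
    define v where "v q = (if fst q < n then u (snd q) else 0)" for q
    show ?thesis unfolding matrix_eigenvalues_def
    proof (intro CollectI exI[of _ v] conjI)
      show "\<forall>q. q \<notin> {0..<n} \<times> P \<longrightarrow> v q = 0"
        using u0 by (auto simp: v_def)
      show "\<exists>q\<in>{0..<n} \<times> P. v q \<noteq> 0"
        using A0 n by (intro bexI[of _ "(0, A0)"]) (auto simp: v_def)
      show "\<forall>q\<in>{0..<n} \<times> P. (\<Sum>q'\<in>{0..<n} \<times> P. M q q' * v q') = \<mu> * v q"
      proof
        fix q assume "q \<in> {0..<n} \<times> P"
        then obtain i A where q: "q = (i, A)" "i < n" "A \<in> P" by auto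
        have "(\<Sum>q'\<in>{0..<n} \<times> P. M (i, A) q' * v q') =
          (\<Sum>B\<in>P. X A B * (\<Sum>j<n. v (j, B))) + (\<Sum>B\<in>P. Y A B * v (i, B))"
          by (rule kron_row[OF fin q(2,3)]) (use M q in auto)
        also have "\<dots> = (\<Sum>B\<in>P. (real n * X A B + Y A B) * u B)"
        proof -
          have "(\<Sum>j<n. v (j, B)) = real n * u B" for B
            unfolding v_def by simp
          moreover have "(\<Sum>B\<in>P. Y A B * v (i, B)) = (\<Sum>B\<in>P. Y A B * u B)"
            unfolding v_def using q by simp
          moreover have "(\<Sum>B\<in>P. X A B * (real n * u B)) + (\<Sum>B\<in>P. Y A B * u B) =
            (\<Sum>B\<in>P. (real n * X A B + Y A B) * u B)"
            by (simp add: sum.distrib algebra_simps)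
          ultimately show ?thesis by simp
        qed
        finally show "(\<Sum>q'\<in>{0..<n} \<times> P. M q q' * v q') = \<mu> * v q"
          using ev q by (simp add: v_def)
      qed
    qed
  qed
qed


lemma walk_refl: "x \<in> V \<Longrightarrow> walk_of_length V E x x 0"
  unfolding walk_of_length_def by (intro exI[of _ "\<lambda>_. x"]) simp

lemma walk_cons:
  assumes "x \<in> V" "E x y" "walk_of_length V E y z k"
  shows "walk_of_length V E x z (Suc k)"
proof -
  obtain p where p: "p 0 = y" "p k = z" "\<forall>i\<le>k. p i \<in> V" "\<forall>i<k. E (p i) (p (Suc i))"
    using assms(3) unfolding walk_of_length_def by blast
  define q where "q i = (if i = 0 then x else p (i - 1))" for i
  show ?thesis unfolding walk_of_length_def
  proof (intro exI[of _ q] conjI allI impI)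
    show "q 0 = x" by (simp add: q_def)
    show "q (Suc k) = z" using p by (simp add: q_def)
    fix i
    show "i \<le> Suc k \<Longrightarrow> q i \<in> V" using p assms(1) by (cases i) (auto simp: q_def)
    show "i < Suc k \<Longrightarrow> E (q i) (q (Suc i))" using p assms(2) by (cases i) (auto simp: q_def)
  qed
qed

lemma walk_prod:
  assumes "walk_of_length V1 E1 a b k" "walk_of_length V2 E2 c d k"
  shows "walk_of_length (V1 \<times> V2) (kron_adj E1 E2) (a, c) (b, d) k"
proof -
  obtain p where p: "p 0 = a" "p k = b" "\<forall>i\<le>k. p i \<in> V1" "\<forall>i<k. E1 (p i) (p (Suc i))"
    using assms(1) unfolding walk_of_length_def by blast
  obtain q where q: "q 0 = c" "q k = d" "\<forall>i\<le>k. q i \<in> V2" "\<forall>i<k. E2 (q i) (q (Suc i))"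
    using assms(2) unfolding walk_of_length_def by blast
  show ?thesis unfolding walk_of_length_def kron_adj_def
    using p q by (intro exI[of _ "\<lambda>i. (p i, q i)"]) auto
qed

lemma walk0: "walk_of_length V E x y 0 \<Longrightarrow> x = y"
  unfolding walk_of_length_def by auto

lemma walk1: "walk_of_length V E x y (Suc 0) \<Longrightarrow> E x y"
  unfolding walk_of_length_def by (metis One_nat_def lessI)

lemma K_walk1:
  assumes "i < n" "j < n" "i \<noteq> j"
  shows "walk_of_length (complete_verts n) complete_adj i j (Suc 0)"
proof (rule walk_cons)
  show "walk_of_length (complete_verts n) complete_adj j j 0" using assms by (intro walk_refl) (simp add: complete_verts_def)
qed (use assms in \<open>auto simp: complete_verts_def complete_adj_def\<close>)

lemma K_walk:
  assumes n: "n \<ge> 3" and k: "k \<ge> 2"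
  shows "\<forall>i j. i < n \<longrightarrow> j < n \<longrightarrow> walk_of_length (complete_verts n) complete_adj i j k"
  using k
proof (induction k rule: dec_induct)
  case base
  show ?case
  proof (intro allI impI)
    fix i j assume ij: "i < n" "j < n"
    have "card ({0..<n} - {i, j}) \<ge> 1"
    proof -
      have "card {i, j} \<le> 2" by (simp add: card_insert_le_m1)
      moreover have "card ({0..<n} - {i, j}) = n - card {i, j}" using ij by (simp add: card_Diff_subset)
      ultimately show ?thesis using n by simp
    qed
    then obtain c where c: "c \<in> {0..<n} - {i, j}" by (metis card.empty ex_in_conv not_one_le_zero)
    show "walk_of_length (complete_verts n) complete_adj i j 2"
      unfolding numeral_2_eq_2
    proof (rule walk_cons)
      show "walk_of_length (complete_verts n) complete_adj c j (Suc 0)" using c ij by (intro K_walk1) auto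
    qed (use c ij in \<open>auto simp: complete_verts_def complete_adj_def\<close>)
  qed
next
  case (step k)
  show ?case
  proof (intro allI impI)
    fix i j assume ij: "i < n" "j < n"
    define c where "c = (if i = 0 then 1 else 0 :: nat)"
    have c: "c < n" "c \<noteq> i" using n by (auto simp: c_def)
    show "walk_of_length (complete_verts n) complete_adj i j (Suc k)"
    proof (rule walk_cons)
      show "walk_of_length (complete_verts n) complete_adj c j k" using step.IH c ij by blast
    qed (use c ij in \<open>auto simp: complete_verts_def complete_adj_def\<close>)
  qed
qed


lemma jadj_sym: "johnson_adj r A B = johnson_adj r B A"
  unfolding johnson_adj_def by (simp add: Int_commute)

lemma J_nbr:
  assumes A: "A \<in> JV m r" and r: "r \<ge> 1" and x: "x \<in> A" and y: "y \<in> {0..<m} - A"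
  shows "insert y (A - {x}) \<in> JV m r" "johnson_adj r A (insert y (A - {x}))"
proof -
  have "insert y (A - {x}) \<in> (\<lambda>(x,y). insert y (A - {x})) ` (A \<times> ({0..<m} - A))" using x y by force
  then have "insert y (A - {x}) \<in> {B \<in> JV m r. johnson_adj r A B}"
    using nbr_bij[OF A r] unfolding bij_betw_def by simp
  then show "insert y (A - {x}) \<in> JV m r" "johnson_adj r A (insert y (A - {x}))" by auto
qed

lemma JV_eq:
  assumes A: "A \<in> JV m r" and B: "B \<in> JV m r" and c: "card (A \<inter> B) \<ge> r"
  shows "A = B"
proof -
  have finA: "finite A" and finB: "finite B" using A B fin_sub by (auto simp: JV_mem)
  have cA: "card A = r" and cB: "card B = r" using A B by (auto simp: JV_mem)
  have "card (A \<inter> B) \<le> card A" using finA by (intro card_mono) auto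
  then have "A \<inter> B = A" using c cA finA by (intro card_subset_eq) auto
  moreover have "A \<inter> B = B" using c cB finB `card (A \<inter> B) \<le> card A` cA by (intro card_subset_eq) auto
  ultimately show ?thesis by simp
qed

lemma J_walk_d:
  assumes r: "r \<ge> 1"
  shows "\<forall>A. A \<in> JV m r \<longrightarrow> B \<in> JV m r \<longrightarrow> r - card (A \<inter> B) = d \<longrightarrow> walk_of_length (JV m r) (johnson_adj r) A B d"
proof (induction d)
  case 0
  show ?case
  proof (intro allI impI)
    fix A assume A: "A \<in> JV m r" and B: "B \<in> JV m r" and d: "r - card (A \<inter> B) = 0"
    then have "A = B" using JV_eq by simp
    then show "walk_of_length (JV m r) (johnson_adj r) A B 0" using A by (simp add: walk_refl)
  qed
next
  case (Suc d)
  show ?case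
  proof (intro allI impI)
    fix A assume A: "A \<in> JV m r" and B: "B \<in> JV m r" and d: "r - card (A \<inter> B) = Suc d"
    have finA: "finite A" and finB: "finite B" using A B fin_sub by (auto simp: JV_mem)
    have cA: "card A = r" and cB: "card B = r" and Bm: "B \<subseteq> {0..<m}" using A B by (auto simp: JV_mem)
    have lt: "card (A \<inter> B) < r" using d by simp
    have "A - B \<noteq> {}"
    proof
      assume "A - B = {}"
      then have "A \<inter> B = A" by auto
      then show False using lt cA by simp
    qed
    then obtain x where x: "x \<in> A" "x \<notin> B" by auto
    have "B - A \<noteq> {}"
    proof
      assume "B - A = {}"
      then have "A \<inter> B = B" by auto
      then show False using lt cB by simp
    qed
    then obtain y where y: "y \<in> B" "y \<notin> A" by auto
    have ym: "y \<in> {0..<m} - A" using y Bm by auto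
    define A' where "A' = insert y (A - {x})"
    have A': "A' \<in> JV m r" "johnson_adj r A A'" unfolding A'_def using J_nbr[OF A r x(1) ym] by auto
    have "A' \<inter> B = insert y (A \<inter> B)" unfolding A'_def using x y by auto
    then have "card (A' \<inter> B) = Suc (card (A \<inter> B))" using y finA by simp
    then have "r - card (A' \<inter> B) = d" using d by simp
    then have "walk_of_length (JV m r) (johnson_adj r) A' B d" using Suc.IH A' B by blast
    then show "walk_of_length (JV m r) (johnson_adj r) A B (Suc d)" using A A' by (intro walk_cons) auto
  qed
qed

lemma J_walk2_refl:
  assumes A: "A \<in> JV m r" and r: "r \<ge> 1" and rm: "r < m"
  shows "walk_of_length (JV m r) (johnson_adj r) A A 2"
proof -
  have finA: "finite A" and cA: "card A = r" and Am: "A \<subseteq> {0..<m}" using A fin_sub by (auto simp: JV_mem)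
  have "A \<noteq> {}" using cA r by auto
  then obtain x where x: "x \<in> A" by auto
  have "card ({0..<m} - A) = m - r" using Am finA cA by (simp add: card_Diff_subset)
  then have "{0..<m} - A \<noteq> {}" using rm by (metis card.empty zero_less_diff less_irrefl)
  then obtain y where y: "y \<in> {0..<m} - A" by blast
  define A' where "A' = insert y (A - {x})"
  have A': "A' \<in> JV m r" "johnson_adj r A A'" unfolding A'_def using J_nbr[OF A r x y] by auto
  have w: "walk_of_length (JV m r) (johnson_adj r) A' A (Suc 0)"
    using A A' jadj_sym by (intro walk_cons[OF _ _ walk_refl]) auto
  show ?thesis unfolding numeral_2_eq_2 by (rule walk_cons[where y = A']) (use A A' w in auto)
qed

lemma J_walk2_adj:
  assumes A: "A \<in> JV m r" and B: "B \<in> JV m r" and r: "r \<ge> 1" and rm: "r + 2 \<le> m"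
    and adj: "johnson_adj r A B"
  shows "walk_of_length (JV m r) (johnson_adj r) A B 2"
proof -
  have finA: "finite A" and cA: "card A = r" and Am: "A \<subseteq> {0..<m}" using A fin_sub by (auto simp: JV_mem)
  have finB: "finite B" and cB: "card B = r" and Bm: "B \<subseteq> {0..<m}" using B fin_sub by (auto simp: JV_mem)
  have cI: "card (A \<inter> B) = r - 1" using adj unfolding johnson_adj_def .
  have "card (A \<union> B) + card (A \<inter> B) = card A + card B" using finA finB by (rule card_Un_Int[symmetric])
  then have cU: "card (A \<union> B) = r + 1" using cA cB cI r by simp
  have "card ({0..<m} - (A \<union> B)) = m - (r + 1)" using Am Bm finA finB cU by (simp add: card_Diff_subset)
  then have "{0..<m} - (A \<union> B) \<noteq> {}" using rm by (metis card.empty diff_is_0_eq not_less_eq_eq add.commute plus_1_eq_Suc add_2_eq_Suc')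
  then obtain z where "z \<in> {0..<m} - (A \<union> B)" by blast
  then have z: "z < m" "z \<notin> A" "z \<notin> B" by auto
  define C where "C = insert z (A \<inter> B)"
  have finI: "finite (A \<inter> B)" using finA by simp
  have cC: "card C = r" unfolding C_def using z finI cI r by simp
  have CV: "C \<in> JV m r" using cC z Am unfolding C_def JV_mem by auto
  have "A \<inter> C = A \<inter> B" unfolding C_def using z by auto
  then have adj1: "johnson_adj r A C" using cI unfolding johnson_adj_def by simp
  have "C \<inter> B = A \<inter> B" unfolding C_def using z by auto
  then have adj2: "johnson_adj r C B" using cI unfolding johnson_adj_def by simp
  have w: "walk_of_length (JV m r) (johnson_adj r) C B (Suc 0)"
    using CV B adj2 by (intro walk_cons[OF _ _ walk_refl]) auto
  show ?thesis unfolding numeral_2_eq_2 by (rule walk_cons[where y = C]) (use A adj1 w in auto)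
qed


abbreviation "VP n m r \<equiv> kron_verts (complete_verts n) (johnson_verts m r)"
abbreviation "EP r \<equiv> kron_adj complete_adj (johnson_adj r)"

lemma VP_eq: "VP n m r = {0..<n} \<times> JV m r"
  unfolding kron_verts_def complete_verts_def by simp

lemma adj_card_step:
  assumes X: "X \<in> JV m r" and Y: "Y \<in> JV m r" and adj: "johnson_adj r X Y" and r: "r \<ge> 1"
  shows "card (A \<inter> X) \<le> card (A \<inter> Y) + 1"
proof -
  have finX: "finite X" and cX: "card X = r" using X fin_sub by (auto simp: JV_mem)
  have finY: "finite Y" using Y fin_sub by (auto simp: JV_mem)
  have "card (X - Y) = card X - card (X \<inter> Y)" by (rule card_Diff_subset_Int) (use finX in simp)
  then have c1: "card (X - Y) = 1" using cX adj r unfolding johnson_adj_def by simp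
  have "A \<inter> X \<subseteq> (A \<inter> Y) \<union> (X - Y)" by auto
  then have "card (A \<inter> X) \<le> card ((A \<inter> Y) \<union> (X - Y))" using finX finY by (intro card_mono) auto
  also have "\<dots> \<le> card (A \<inter> Y) + card (X - Y)" by (rule card_Un_le)
  finally show ?thesis using c1 by simp
qed

lemma walk_lower:
  assumes w: "walk_of_length (VP n m r) (EP r) (i, A) (j, B) k" and A: "A \<in> JV m r" and r: "r \<ge> 1"
  shows "r - card (A \<inter> B) \<le> k"
proof -
  obtain p where p: "p 0 = (i, A)" "p k = (j, B)" "\<forall>t\<le>k. p t \<in> VP n m r" "\<forall>t<k. EP r (p t) (p (Suc t))"
    using w unfolding walk_of_length_def by blast
  have "t \<le> k \<longrightarrow> r - card (A \<inter> snd (p t)) \<le> t" for t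
  proof (induction t)
    case 0
    have "card (A \<inter> A) = r" using A by (simp add: JV_mem)
    then show ?case using p(1) by simp
  next
    case (Suc t)
    show ?case
    proof
      assume t: "Suc t \<le> k"
      have X: "snd (p t) \<in> JV m r" using p(3) t unfolding VP_eq by (metis Suc_leD mem_Times_iff)
      have Y: "snd (p (Suc t)) \<in> JV m r" using p(3) t unfolding VP_eq by (metis mem_Times_iff)
      have adj: "johnson_adj r (snd (p t)) (snd (p (Suc t)))" using p(4) t unfolding kron_adj_def by auto
      have "card (A \<inter> snd (p t)) \<le> card (A \<inter> snd (p (Suc t))) + 1" by (rule adj_card_step[OF X Y adj r])
      then show "r - card (A \<inter> snd (p (Suc t))) \<le> Suc t" using Suc.IH t by simp
    qed
  qed
  then show ?thesis using p(2) by (metis le_refl snd_conv)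
qed

definition dnat :: "nat \<Rightarrow> nat \<Rightarrow> nat set \<Rightarrow> nat \<Rightarrow> nat set \<Rightarrow> nat" where
  "dnat r i A j B = (let d = r - card (A \<inter> B) in
     if d = 0 then (if i = j then 0 else 2) else if d = 1 then (if i = j then 2 else 1) else d)"

lemma dist_formula:
  assumes n: "n \<ge> 3" and r: "r \<ge> 1" and m: "2*r \<le> m" and m3: "m \<ge> 3"
    and i: "i < n" and j: "j < n" and A: "A \<in> JV m r" and B: "B \<in> JV m r"
  shows "graph_dist (VP n m r) (EP r) (i, A) (j, B) = dnat r i A j B"
proof -
  define d where "d = r - card (A \<inter> B)"
  have rm2: "r + 2 \<le> m" using r m m3 by linarith
  have dAB: "d = 0 \<longleftrightarrow> A = B" unfolding d_def using JV_eq[OF A B] A by (auto simp: JV_mem)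
  have cle: "card (A \<inter> B) \<le> r" using card_int_le[OF A] .
  have d1: "d = 1 \<longleftrightarrow> johnson_adj r A B" unfolding d_def johnson_adj_def using cle r by auto
  have Kw: "walk_of_length (complete_verts n) complete_adj i j k" if "k \<ge> 2" for k
    using K_walk[OF n that] i j by blast
  have Jw: "walk_of_length (JV m r) (johnson_adj r) A B d" using J_walk_d[OF r] A B d_def by blast
  let ?P = "\<lambda>k. walk_of_length (VP n m r) (EP r) (i, A) (j, B) k"
  have ex: "?P (dnat r i A j B)"
  proof -
    have VP: "VP n m r = complete_verts n \<times> JV m r" unfolding kron_verts_def by simp
    show ?thesis
    proof (cases "d = 0")
      case True
      then have AB: "A = B" using dAB by simp
      show ?thesis
      proof (cases "i = j")
        case True
        have "(i, A) \<in> VP n m r" using A i unfolding VP_eq by simp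
        then have "?P 0" using walk_refl[of "(i, A)" "VP n m r" "EP r"] AB True by simp
        then show ?thesis using True `d = 0` unfolding dnat_def d_def[symmetric] Let_def by simp
      next
        case False
        have "?P 2" unfolding VP using walk_prod[OF Kw J_walk2_refl[OF A r]] AB m r by simp
        then show ?thesis using False `d = 0` unfolding dnat_def d_def[symmetric] Let_def by simp
      qed
    next
      case d0: False
      show ?thesis
      proof (cases "d = 1")
        case True
        then have adj: "johnson_adj r A B" using d1 by simp
        show ?thesis
        proof (cases "i = j")
          case True
          have "?P 2" unfolding VP using walk_prod[OF Kw J_walk2_adj[OF A B r rm2 adj]] by simp
          then show ?thesis using True `d = 1` unfolding dnat_def d_def[symmetric] Let_def by simp
        next
          case False
          have "?P 1" unfolding VP using walk_prod[OF K_walk1[OF i j False] Jw[unfolded True One_nat_def]] by simp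
          then show ?thesis using False `d = 1` unfolding dnat_def d_def[symmetric] Let_def by simp
        qed
      next
        case False
        then have "d \<ge> 2" using d0 by simp
        then have "?P d" unfolding VP using walk_prod[OF Kw Jw] by simp
        then show ?thesis using False d0 unfolding dnat_def d_def[symmetric] Let_def by simp
      qed
    qed
  qed
  have low: "dnat r i A j B \<le> k" if w: "?P k" for k
  proof -
    have dk: "d \<le> k" using walk_lower[OF w A r] unfolding d_def .
    have k0: "i = j \<and> A = B" if "k = 0"
    proof -
      have "walk_of_length (VP n m r) (EP r) (i, A) (j, B) 0" using w that by simp
      from walk0[OF this] show ?thesis by simp
    qed
    have k1: "i \<noteq> j \<and> johnson_adj r A B" if "k = 1"
    proof -
      have "walk_of_length (VP n m r) (EP r) (i, A) (j, B) (Suc 0)" using w that by simp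
      from walk1[OF this] show ?thesis unfolding kron_adj_def complete_adj_def by simp
    qed
    have nadj: "\<not> johnson_adj r A A" using A r unfolding johnson_adj_def by (simp add: JV_mem)
    show ?thesis
    proof (cases "d = 0")
      case True
      then have "A = B" using dAB by simp
      then show ?thesis using True k0 k1 nadj unfolding dnat_def d_def[symmetric] Let_def
        by (cases k) (auto, (case_tac nat; auto))
    next
      case d0: False
      show ?thesis
      proof (cases "d = 1")
        case d1: True
        show ?thesis
        proof (cases "i = j")
          case True
          have "k \<noteq> 1" using k1 True by blast
          then show ?thesis using dk d1 True unfolding dnat_def d_def[symmetric] Let_def by simp
        next
          case False
          then show ?thesis using dk d1 unfolding dnat_def d_def[symmetric] Let_def by simp
        qed
      next
        case False
        then show ?thesis using dk d0 unfolding dnat_def d_def[symmetric] Let_def by simp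
      qed
    qed
  qed
  show ?thesis unfolding graph_dist_def by (rule Least_equality[where P = ?P, OF ex low])
qed


lemma dnat_real:
  assumes r: "r \<ge> 1" and A: "A \<in> JV m r" and B: "B \<in> JV m r"
  shows "real (dnat r i A j B) = (real (r - card (A \<inter> B)) + (if A = B then 2 else 0))
     + (if i = j then adjm r A B + (if A = B then -2 else 0) else 0)"
proof -
  define d where "d = r - card (A \<inter> B)"
  have dAB: "d = 0 \<longleftrightarrow> A = B" unfolding d_def using JV_eq[OF A B] A by (auto simp: JV_mem)
  have cle: "card (A \<inter> B) \<le> r" using card_int_le[OF A] .
  have d1: "d = 1 \<longleftrightarrow> johnson_adj r A B" unfolding d_def johnson_adj_def using cle r by auto
  show ?thesis
    unfolding dnat_def d_def[symmetric] Let_def adjm_def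
    using dAB d1 by (cases "d = 0"; cases "d = 1"; cases "i = j") auto
qed

theorem main:
  fixes n m r :: nat
  assumes "n \<ge> 3" and "r \<ge> 1" and "m \<ge> 2 * r" and "m \<ge> 3"
  shows "distance_eigenvalues
           (kron_verts (complete_verts n) (johnson_verts m r))
           (kron_adj complete_adj (johnson_adj r))
         = {2 * real n - 2 + real n * johnson_s m r + johnson_lambda m r 0,
            2 * real n - 2 - real n * johnson_s m r / (real m - 1) + johnson_lambda m r 1}
           \<union> {2 * real n - 2 + johnson_lambda m r i | i. 2 \<le> i \<and> i \<le> r}
           \<union> {johnson_lambda m r i - 2 | i. i \<le> r}"
proof -
  note n = assms(1) and r = assms(2) and m = assms(3) and m3 = assms(4)
  define X where "X A B = real (r - card (A \<inter> B)) + (if A = B then 2 else (0::real))" for A B :: "nat set"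
  define Y where "Y A B = adjm r A B + (if A = B then -2 else (0::real))" for A B :: "nat set"
  have DM: "distance_matrix (VP n m r) (EP r) (i, A) (j, B) = X A B + (if i = j then Y A B else 0)"
    if "i < n" "j < n" "A \<in> JV m r" "B \<in> JV m r" for i j A B
    unfolding distance_matrix_def X_def Y_def
    using dist_formula[OF n r _ m3 that] dnat_real[OF r that(3,4)] m by simp
  have "distance_eigenvalues (VP n m r) (EP r) = matrix_eigenvalues ({0..<n} \<times> JV m r) (distance_matrix (VP n m r) (EP r))"
    unfolding distance_eigenvalues_def VP_eq ..
  also have "\<dots> = matrix_eigenvalues (JV m r) Y \<union> matrix_eigenvalues (JV m r) (\<lambda>A B. real n * X A B + Y A B)"
    by (rule kron_eig[OF JV_fin]) (use n DM in auto)
  also have "matrix_eigenvalues (JV m r) Y = (\<lambda>t. t + -2) ` matrix_eigenvalues (JV m r) (adjm r)"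
    unfolding Y_def by (rule eig_shift[OF JV_fin])
  also have "matrix_eigenvalues (JV m r) (adjm r) = {johnson_lambda m r i | i. i \<le> r}"
    by (rule J1[OF r]) (use m in simp)
  also have "matrix_eigenvalues (JV m r) (\<lambda>A B. real n * X A B + Y A B) =
      matrix_eigenvalues (JV m r) (\<lambda>A B. lm n r A B + (if A = B then 2 * real n - 2 else 0))"
    by (rule eig_cong) (simp add: X_def Y_def lm_def algebra_simps)
  also have "\<dots> = (\<lambda>t. t + (2 * real n - 2)) ` matrix_eigenvalues (JV m r) (lm n r)"
    by (rule eig_shift[OF JV_fin])
  also have "matrix_eigenvalues (JV m r) (lm n r) =
    {real n * johnson_s m r + johnson_lambda m r 0, johnson_lambda m r 1 - real n * johnson_s m r / (real m - 1)}
    \<union> {johnson_lambda m r i | i. 2 \<le> i \<and> i \<le> r}"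
    by (rule J2[OF r]) (use m m3 in simp_all)
  finally show ?thesis by (auto simp: image_iff algebra_simps)
qed


theorem theorem4p6:
  fixes n m r :: nat
  assumes "n \<ge> 3" and "r \<ge> 1" and "m \<ge> 2 * r" and "m \<ge> 3"
  shows "distance_eigenvalues
           (kron_verts (complete_verts n) (johnson_verts m r))
           (kron_adj complete_adj (johnson_adj r))
         = {2 * real n - 2 + real n * johnson_s m r + johnson_lambda m r 0,
            2 * real n - 2 - real n * johnson_s m r / (real m - 1) + johnson_lambda m r 1}
           \<union> {2 * real n - 2 + johnson_lambda m r i | i. 2 \<le> i \<and> i \<le> r}
           \<union> {johnson_lambda m r i - 2 | i. i \<le> r}"
  by (rule main[OF assms])

end
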